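(* In the FuRBI setup below, with $\delta:=-\int_{\mathbb{R}_+^2}\frac{\partial^2\psi_b}{\partial u_1\partial u_2}(u_1,u_2)e^{-\psi_b(u_1,u_2)}\mathrm{d}u_1\mathrm{d}u_2$, for all measurable $C,D\subseteq\mathbb{X}^2$ with $C\cap D=\emptyset$, $$\int_{\mathbb{R}_+^2}\mathbb{E}\Big[e^{-u_1\mu_1(\mathbb{X}^2)-u_2\mu_2(\mathbb{X}^2)}\mu_1(C)\mu_2(D)\Big]\mathrm{d}u_1\mathrm{d}u_2=G_0(C)\,G_0(D)\,(1-\delta).$$
   Context: FuRBI setup. Let $\mathbb{X}$ be a Polish space, $\theta\in(0,\infty)$, and $G_0$ a non-atomic probability measure on $\mathbb{X}^2$ whose two marginals both equal a probability measure $P_0$ on $\mathbb{X}$. Let $\rho$ be a measure on $[0,\infty)^2\setminus\{(0,0)\}$ with $\int\min\{1,s_1+s_2\}\rho(\mathrm{d}s_1,\mathrm{d}s_2)<\infty$, whose two marginal jump measures on $(0,\infty)$, $\rho(\mathrm{d}s\times[0,\infty))$ and $\rho([0,\infty)\times\mathrm{d}s)$, coincide (their common value is denoted $\rho(\mathrm{d}s)$) and have infinite total mass. Let $(\mu_1,\mu_2)$ be a completely random vector on $\mathbb{X}^2$ (a pair of random measures such that for pairwise disjoint measurable $C_1,\dots,C_n$ the vectors $(\mu_1(C_l),\mu_2(C_l))$, $l=1,\dots,n$, are mutually independent), without fixed atoms or deterministic part, with Lévy intensity $\rho(\mathrm{d}s_1,\mathrm{d}s_2)\,\theta G_0(\mathrm{d}x)$,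 i.e. $\mathbb{E}[e^{-\mu_1(f_1)-\mu_2(f_2)}]=\exp\{-\theta\int_{\mathbb{X}^2}\int(1-e^{-s_1f_1(x)-s_2f_2(x)})\rho(\mathrm{d}s_1,\mathrm{d}s_2)G_0(\mathrm{d}x)\}$ for measurable $f_1,f_2\ge0$. Equivalently $\mu_1=\sum_kJ_k\delta_{(\theta_k,\phi_k)}$, $\mu_2=\sum_kW_k\delta_{(\theta_k,\phi_k)}$ with $(\theta_k,\phi_k)\overset{iid}{\sim}G_0$ independent of the jumps. The FuRBI CRMs are $\tilde\mu_1(A)=\mu_1(A\times\mathbb{X})$, $\tilde\mu_2(B)=\mu_2(\mathbb{X}\times B)$; the n-FuRBI are $\tilde p_j=\tilde\mu_j/\tilde\mu_j(\mathbb{X})$, $j=1,2$. Laplace exponents: $\psi_b(\lambda_1,\lambda_2)=\theta\int(1-e^{-\lambda_1s_1-\lambda_2s_2})\rho(\mathrm{d}s_1,\mathrm{d}s_2)$ and $\psi(\lambda)=\psi_b(\lambda,0)=\psi_b(0,\lambda)$. *)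

theory Defs
  imports "HOL-Analysis.Analysis" "HOL-Probability.Probability"
begin

definition enexp :: "ennreal \<Rightarrow> real" where
  "enexp x = (if x = \<infinity> then 0 else exp (- enn2real x))"

definition psi_b :: "(real \<times> real) measure \<Rightarrow> real \<Rightarrow> real \<Rightarrow> real \<Rightarrow> real" where
  "psi_b \<rho> \<theta> l1 l2 = \<theta> * (\<integral>s. (1 - exp (- (l1 * fst s + l2 * snd s))) \<partial>\<rho>)"

definition furbi_delta :: "(real \<times> real) measure \<Rightarrow> real \<Rightarrow> real" where
  "furbi_delta \<rho> \<theta> =
     - (LINT u:{0<..}\<times>{0<..}|lborel.
          deriv (\<lambda>a. deriv (\<lambda>b. psi_b \<rho> \<theta> a b) (snd u)) (fst u)
          * exp (- psi_b \<rho> \<theta> (fst u) (snd u)))"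

definition furbi_levy :: "(real \<times> real) measure \<Rightarrow> bool" where
  "furbi_levy \<rho> \<longleftrightarrow>
     sets \<rho> = sets borel \<and>
     emeasure \<rho> (UNIV - ({0..} \<times> {0..} - {(0,0)})) = 0 \<and>
     (\<integral>\<^sup>+ s. ennreal (min 1 (fst s + snd s)) \<partial>\<rho>) < \<infinity> \<and>
     (\<forall>A \<in> sets (borel :: real measure). A \<subseteq> {0<..} \<longrightarrow>
        emeasure \<rho> (A \<times> {0..}) = emeasure \<rho> ({0..} \<times> A)) \<and>
     emeasure \<rho> ({0<..} \<times> {0..}) = \<infinity>"

definition furbi_base :: "('a::polish_space \<times> 'a) measure \<Rightarrow> bool" where
  "furbi_base G0 \<longleftrightarrow>
     prob_space G0 \<and> sets G0 = sets borel \<and>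
     (\<forall>x. emeasure G0 {x} = 0) \<and>
     distr G0 borel fst = distr G0 borel snd"

text \<open>(mu1, mu2) is a completely random vector on X^2 (random measures defined on the
  probability space M) without fixed atoms or deterministic part, with Levy intensity
  rho(ds1,ds2) theta G0(dx), characterised by its joint Laplace functional.\<close>
definition furbi_crv ::
  "'w measure \<Rightarrow> ('w \<Rightarrow> ('a::polish_space \<times> 'a) measure) \<Rightarrow> ('w \<Rightarrow> ('a \<times> 'a) measure)
    \<Rightarrow> (real \<times> real) measure \<Rightarrow> real \<Rightarrow> ('a \<times> 'a) measure \<Rightarrow> bool" where
  "furbi_crv M \<mu>1 \<mu>2 \<rho> \<theta> G0 \<longleftrightarrow>
     prob_space M \<and>
     (\<forall>\<omega> \<in> space M. sets (\<mu>1 \<omega>) = sets borel \<and> sets (\<mu>2 \<omega>) = sets borel) \<and>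
     (\<forall>C \<in> sets (borel :: ('a \<times> 'a) measure).
        (\<lambda>\<omega>. emeasure (\<mu>1 \<omega>) C) \<in> borel_measurable M \<and>
        (\<lambda>\<omega>. emeasure (\<mu>2 \<omega>) C) \<in> borel_measurable M) \<and>
     (\<forall>f1 f2 :: 'a \<times> 'a \<Rightarrow> real.
        f1 \<in> borel_measurable borel \<longrightarrow> f2 \<in> borel_measurable borel \<longrightarrow>
        (\<forall>x. 0 \<le> f1 x) \<longrightarrow> (\<forall>x. 0 \<le> f2 x) \<longrightarrow>
        (\<integral>\<omega>. enexp ((\<integral>\<^sup>+ x. ennreal (f1 x) \<partial>(\<mu>1 \<omega>)) + (\<integral>\<^sup>+ x. ennreal (f2 x) \<partial>(\<mu>2 \<omega>))) \<partial>M)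
        = enexp (ennreal \<theta> * (\<integral>\<^sup>+ x. (\<integral>\<^sup>+ s.
              ennreal (1 - exp (- (fst s * f1 x + snd s * f2 x))) \<partial>\<rho>) \<partial>G0)))"

end

theory Submission
  imports Defs
begin


lemma integral_dominated_convergence_eventually:
  fixes s :: "nat \<Rightarrow> 'a \<Rightarrow> real" and f :: "'a \<Rightarrow> real" and w :: "'a \<Rightarrow> real"
  assumes "f \<in> borel_measurable M" "integrable M w"
    and lim: "AE x in M. (\<lambda>i. s i x) \<longlonglongrightarrow> f x"
    and ev: "eventually (\<lambda>i. s i \<in> borel_measurable M \<and> (AE x in M. norm (s i x) \<le> w x)) sequentially"
  shows "(\<lambda>i. integral\<^sup>L M (s i)) \<longlonglongrightarrow> integral\<^sup>L M f"
proof -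
  from ev obtain N where N: "\<And>n. N \<le> n \<Longrightarrow> s n \<in> borel_measurable M \<and> (AE x in M. norm (s n x) \<le> w x)"
    by (auto simp: eventually_sequentially)
  show ?thesis
  proof (rule LIMSEQ_offset[where k=N], rule integral_dominated_convergence[where w=w])
    show "AE x in M. norm (s (n + N) x) \<le> w x" for n using N[of "n+N"] by auto
    show "s (n + N) \<in> borel_measurable M" for n using N[of "n+N"] by auto
    show "AE x in M. (\<lambda>n. s (n + N) x) \<longlonglongrightarrow> f x"
      using lim by eventually_elim (rule LIMSEQ_ignore_initial_segment)
  qed (use assms in auto)
qed

lemma integral_dominated_convergence_within:
  fixes h :: "real \<Rightarrow> 'a \<Rightarrow> real" and h0 w :: "'a \<Rightarrow> real"
  assumes "h0 \<in> borel_measurable M" "integrable M w"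
    and lim: "AE s in M. ((\<lambda>y. h y s) \<longlongrightarrow> h0 s) (at x within S)"
    and ev: "eventually (\<lambda>y. h y \<in> borel_measurable M \<and> (AE s in M. norm (h y s) \<le> w s)) (at x within S)"
  shows "((\<lambda>y. integral\<^sup>L M (h y)) \<longlongrightarrow> integral\<^sup>L M h0) (at x within S)"
  unfolding tendsto_at_iff_sequentially
proof (intro allI impI)
  fix X :: "nat \<Rightarrow> real" assume X: "\<forall>i. X i \<in> S - {x}" "X \<longlonglongrightarrow> x"
  then have F: "filterlim X (at x within S) sequentially"
    by (auto simp: filterlim_at)
  show "((\<lambda>y. integral\<^sup>L M (h y)) \<circ> X) \<longlonglongrightarrow> integral\<^sup>L M h0"
    unfolding comp_def
  proof (rule integral_dominated_convergence_eventually[where w=w])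
    show "AE s in M. (\<lambda>i. h (X i) s) \<longlonglongrightarrow> h0 s"
      using lim by eventually_elim (rule filterlim_compose[OF _ F])
    show "eventually (\<lambda>i. h (X i) \<in> borel_measurable M \<and> (AE s in M. norm (h (X i) s) \<le> w s)) sequentially"
      using filterlim_iff[THEN iffD1, OF F, rule_format, OF ev] .
  qed (use assms in auto)
qed

lemma DERIV_integral:
  fixes f f' :: "real \<Rightarrow> 'a \<Rightarrow> real" and g :: "'a \<Rightarrow> real"
  assumes x0: "l < x0" "x0 < r"
  and int: "integrable M (f x0)"
  and meas: "\<And>x. l < x \<Longrightarrow> x < r \<Longrightarrow> f x \<in> borel_measurable M"
  and meas': "f' x0 \<in> borel_measurable M"
  and der: "AE s in M. \<forall>x. l < x \<and> x < r \<longrightarrow> ((\<lambda>x. f x s) has_real_derivative f' x s) (at x)"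
  and bd: "AE s in M. \<forall>x. l < x \<and> x < r \<longrightarrow> \<bar>f' x s\<bar> \<le> g s"
  and g: "integrable M g"
  shows "((\<lambda>x. \<integral>s. f x s \<partial>M) has_real_derivative (\<integral>s. f' x0 s \<partial>M)) (at x0)"
proof -
  have mvt: "\<bar>f y s - f x0 s\<bar> \<le> \<bar>y - x0\<bar> * g s"
    if y: "l < y" "y < r" and s: "\<forall>x. l < x \<and> x < r \<longrightarrow> ((\<lambda>x. f x s) has_real_derivative f' x s) (at x)"
      "\<forall>x. l < x \<and> x < r \<longrightarrow> \<bar>f' x s\<bar> \<le> g s" for y s
  proof -
    have gen: "\<bar>f b s - f a s\<bar> \<le> (b - a) * g s" if ab: "a < b" "l < a" "b < r" for a b
    proof -
      obtain z where z: "a < z" "z < b" "f b s - f a s = (b - a) * f' z s"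
        using MVT2[of a b "\<lambda>x. f x s" "\<lambda>x. f' x s"] ab s(1) by force
      have "\<bar>f' z s\<bar> \<le> g s" using s(2) z ab by auto
      then show ?thesis using z(3) ab by (simp add: abs_mult mult_left_mono)
    qed
    consider "y = x0" | "y < x0" | "x0 < y" by linarith
    then show ?thesis
    proof cases
      case 2 then show ?thesis using gen[of y x0] y x0 by (simp add: abs_minus_commute)
    next
      case 3 then show ?thesis using gen[of x0 y] y x0 by simp
    qed simp
  qed
  have intf: "integrable M (f y)" if y: "l < y" "y < r" for y
  proof (rule Bochner_Integration.integrable_bound[where f="\<lambda>s. \<bar>f x0 s\<bar> + \<bar>y - x0\<bar> * g s"])
    show "integrable M (\<lambda>s. \<bar>f x0 s\<bar> + \<bar>y - x0\<bar> * g s)"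
      using int g by auto
    show "f y \<in> borel_measurable M" using meas y .
    show "AE s in M. norm (f y s) \<le> norm (\<bar>f x0 s\<bar> + \<bar>y - x0\<bar> * g s)"
      using der bd
    proof eventually_elim
      case (elim s)
      have "0 \<le> g s" using elim(2) x0 by (meson abs_ge_zero order_trans)
      then show ?case using mvt[OF y elim] by auto
    qed
  qed
  have ev_in: "eventually (\<lambda>y. y \<in> {l<..<r}) (at x0)"
    using x0 by (intro eventually_at_in_open') auto
  have lim: "((\<lambda>y. \<integral>s. (f y s - f x0 s) / (y - x0) \<partial>M) \<longlongrightarrow> (\<integral>s. f' x0 s \<partial>M)) (at x0)"
  proof (rule integral_dominated_convergence_within[where w=g])
    show "AE s in M. ((\<lambda>y. (f y s - f x0 s) / (y - x0)) \<longlongrightarrow> f' x0 s) (at x0)"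
      using der by eventually_elim (use x0 in \<open>auto simp: has_field_derivative_iff\<close>)
    show "eventually (\<lambda>y. (\<lambda>s. (f y s - f x0 s) / (y - x0)) \<in> borel_measurable M \<and>
        (AE s in M. norm ((f y s - f x0 s) / (y - x0)) \<le> g s)) (at x0)"
      using ev_in
    proof eventually_elim
      case (elim y)
      note yin = elim
      have "(\<lambda>s. (f y s - f x0 s) / (y - x0)) \<in> borel_measurable M"
        using meas[of y] meas[of x0] x0 elim by (intro borel_measurable_divide borel_measurable_diff) auto
      moreover have "AE s in M. norm ((f y s - f x0 s) / (y - x0)) \<le> g s"
        using der bd
      proof eventually_elim
        case (elim s)
        show ?case using mvt[of y s] yin elim
          by (auto simp: divide_le_eq abs_divide mult.commute)
      qed
      ultimately show ?case by blast
    qed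
  qed (use meas' g in auto)
  have eq: "eventually (\<lambda>y. (\<integral>s. (f y s - f x0 s) / (y - x0) \<partial>M) = ((\<integral>s. f y s \<partial>M) - (\<integral>s. f x0 s \<partial>M)) / (y - x0)) (at x0)"
    using ev_in
  proof eventually_elim
    case (elim y) then show ?case using intf[of y] int by simp
  qed
  show ?thesis unfolding has_field_derivative_iff
    using Lim_transform_eventually[OF lim eq] .
qed




lemma one_minus_exp_le: "0 \<le> (x::real) \<Longrightarrow> 1 - exp (- x) \<le> min 1 x"
  using exp_ge_add_one_self[of "-x"] by (auto simp: min_def)

lemma one_minus_exp_nonneg: "0 \<le> (x::real) \<Longrightarrow> 0 \<le> 1 - exp (- x)"
  by simp

lemma min_scale_le: "0 \<le> (y::real) \<Longrightarrow> 0 \<le> M \<Longrightarrow> min 1 (M * y) \<le> max 1 M * min 1 y"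
proof -
  assume y: "0 \<le> y" and M: "0 \<le> M"
  show ?thesis
  proof (cases "y \<le> 1")
    case True
    then have "min 1 (M * y) \<le> M * y" by simp
    also have "\<dots> \<le> max 1 M * y" using y by (intro mult_right_mono) auto
    finally show ?thesis using True by (simp add: min_def)
  next
    case False
    have "min 1 (M * y) \<le> 1" by simp
    also have "1 \<le> max 1 M" by simp
    finally show ?thesis using False by (simp add: min_def)
  qed
qed

lemma y_exp_le: assumes "0 \<le> (y::real)" "0 < c" shows "y * exp (- (c * y)) \<le> max 1 (1 / c) * min 1 y"
proof -
  have e: "exp (- (c * y)) \<le> 1" using assms by simp
  have "c * y \<le> exp (c * y)" using exp_ge_add_one_self[of "c*y"] by linarith
  then have "c * y * exp (- (c * y)) \<le> 1"
    by (simp add: exp_minus field_simps)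
  then have b2: "y * exp (- (c * y)) \<le> 1 / c" using assms by (simp add: field_simps)
  show ?thesis
  proof (cases "y \<le> 1")
    case True
    have "y * exp (- (c * y)) \<le> y" using e assms by (simp add: mult_left_le)
    also have "\<dots> \<le> max 1 (1/c) * y" using mult_right_mono[OF max.cobounded1[of 1 "1/c"] assms(1)] by simp
    finally show ?thesis using True by (simp add: min_def)
  next
    case False
    then show ?thesis using b2 by (simp add: min_def)
  qed
qed

lemma y_exp_le': assumes "0 \<le> (y::real)" "0 < c" shows "y * exp (- (c * y)) \<le> 1 / c"
proof -
  have "c * y \<le> exp (c * y)" using exp_ge_add_one_self[of "c*y"] by linarith
  then have "c * y * exp (- (c * y)) \<le> 1"
    by (simp add: exp_minus field_simps)
  then show ?thesis using assms by (simp add: field_simps)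
qed

lemma sets_borel_pair[measurable_cong]:
  "sets (borel :: ('a::second_countable_topology \<times> 'b::second_countable_topology) measure) = sets (borel \<Otimes>\<^sub>M borel)"
  by (subst borel_prod) (rule refl)

locale levy =
  fixes \<rho> :: "(real \<times> real) measure"
  assumes L: "furbi_levy \<rho>"
begin

lemma sets_rho[measurable_cong]: "sets \<rho> = sets borel"
  using L by (simp add: furbi_levy_def)

lemma space_rho[simp]: "space \<rho> = UNIV"
  using sets_eq_imp_space_eq[OF sets_rho] by simp

lemma Q_borel: "UNIV - ({0..} \<times> {0..} - {(0::real,0::real)}) \<in> sets borel"
proof -
  have "closed ({0::real..} \<times> {0::real..})" using closed_Times[OF closed_atLeast closed_atLeast] .
  then have "{0::real..} \<times> {0::real..} \<in> sets borel" by (rule borel_closed)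
  then show ?thesis by auto
qed

lemma AE_Q: "AE s in \<rho>. 0 \<le> fst s \<and> 0 \<le> snd s \<and> s \<noteq> (0,0)"
proof (rule AE_I')
  show "UNIV - ({0..} \<times> {0..} - {(0::real,0::real)}) \<in> null_sets \<rho>"
    using L Q_borel sets_rho by (auto simp: furbi_levy_def null_sets_def)
  show "{s \<in> space \<rho>. \<not> (0 \<le> fst s \<and> 0 \<le> snd s \<and> s \<noteq> (0, 0))} \<subseteq> UNIV - ({0..} \<times> {0..} - {(0, 0)})"
    by (auto simp: mem_Times_iff)
qed

lemma AE_Q': "AE s in \<rho>. 0 \<le> fst s \<and> 0 \<le> snd s"
  using AE_Q by eventually_elim auto

definition m :: "real \<times> real \<Rightarrow> real" where "m s = min 1 (fst s + snd s)"

lemma m_meas[measurable]: "m \<in> borel_measurable borel"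
  unfolding m_def by measurable

lemma m_int: "integrable \<rho> m"
proof (rule integrableI_nonneg)
  show "m \<in> borel_measurable \<rho>" by measurable
  show "AE x in \<rho>. 0 \<le> m x" using AE_Q' by eventually_elim (auto simp: m_def)
  show "(\<integral>\<^sup>+ x. ennreal (m x) \<partial>\<rho>) < \<infinity>" using L by (simp add: furbi_levy_def m_def)
qed

lemma int_bound:
  assumes [measurable]: "g \<in> borel_measurable borel"
    and b: "\<And>s. 0 \<le> fst s \<Longrightarrow> 0 \<le> snd s \<Longrightarrow> \<bar>g s\<bar> \<le> c * m s"
  shows "integrable \<rho> g"
proof (rule Bochner_Integration.integrable_bound[where f="\<lambda>s. c * m s"])
  show "integrable \<rho> (\<lambda>s. c * m s)" using m_int by simp
  show "g \<in> borel_measurable \<rho>" by measurable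
  show "AE x in \<rho>. norm (g x) \<le> norm (c * m x)"
    using AE_Q' by eventually_elim (use b in force)
qed

lemma sigma_finite: "sigma_finite_measure \<rho>"
proof
  define F where "F n = (if n = 0 then {s. m s \<le> 0} else {s. 1 / real n \<le> m s})" for n
  have Fm: "F n \<in> sets \<rho>" for n unfolding sets_rho by (cases "n = 0") (simp_all add: F_def, measurable)
  have "emeasure \<rho> (F n) \<noteq> \<infinity>" for n
  proof (cases "n = 0")
    case True
    have "F n \<subseteq> UNIV - ({0..} \<times> {0..} - {(0::real,0::real)})"
      using True by (auto simp: F_def m_def mem_Times_iff)
    then have "emeasure \<rho> (F n) \<le> emeasure \<rho> (UNIV - ({0..} \<times> {0..} - {(0::real,0::real)}))"
      by (intro emeasure_mono) (use Q_borel sets_rho in auto)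
    also have "\<dots> = 0" using L by (simp add: furbi_levy_def)
    finally show ?thesis by auto
  next
    case False
    have "emeasure \<rho> (F n) = (\<integral>\<^sup>+ s. indicator (F n) s \<partial>\<rho>)" using Fm by simp
    also have "\<dots> \<le> (\<integral>\<^sup>+ s. ennreal (real n) * ennreal (m s) \<partial>\<rho>)"
    proof (intro nn_integral_mono)
      fix s
      show "indicator (F n) s \<le> ennreal (real n) * ennreal (m s)"
      proof (cases "s \<in> F n")
        case True
        then have "1 / real n \<le> m s" using False by (simp add: F_def)
        then have "1 \<le> real n * m s" using False by (simp add: field_simps)
        moreover have "0 \<le> m s" using \<open>1 / real n \<le> m s\<close> by (smt (verit) divide_nonneg_nonneg of_nat_0_le_iff)
        ultimately show ?thesis using True by (simp add: ennreal_mult'[symmetric])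
      qed simp
    qed
    also have "\<dots> = ennreal (real n) * (\<integral>\<^sup>+ s. ennreal (m s) \<partial>\<rho>)"
      by (rule nn_integral_cmult) measurable
    also have "\<dots> < \<infinity>" using L by (simp add: furbi_levy_def m_def ennreal_mult_less_top)
    finally show ?thesis by simp
  qed
  moreover have "(\<Union>n. F n) = UNIV"
  proof safe
    fix s :: "real \<times> real"
    show "s \<in> (\<Union>n. F n)"
    proof (cases "m s \<le> 0")
      case True then show ?thesis by (intro UN_I[of 0]) (auto simp: F_def)
    next
      case False
      obtain n where n: "1 / m s < real n" using reals_Archimedean2 by blast
      have "0 < 1 / m s" using False by simp
      then have "n \<noteq> 0" using n by (metis of_nat_0 order.asym)
      moreover have "1 / real n \<le> m s" using n False \<open>n \<noteq> 0\<close>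
        by (simp add: field_simps not_le)
      ultimately show ?thesis by (intro UN_I[of n]) (auto simp: F_def)
    qed
  qed simp
  ultimately show "\<exists>A. countable A \<and> A \<subseteq> sets \<rho> \<and> \<Union> A = space \<rho> \<and> (\<forall>a\<in>A. emeasure \<rho> a \<noteq> \<infinity>)"
    using Fm by (intro exI[of _ "range F"]) auto
qed

end




context levy begin

definition "K a b = (\<integral>s. (1 - exp (- (a * fst s + b * snd s))) \<partial>\<rho>)"
definition "K1 a b = (\<integral>s. fst s * exp (- (a * fst s + b * snd s)) \<partial>\<rho>)"
definition "K2 a b = (\<integral>s. snd s * exp (- (a * fst s + b * snd s)) \<partial>\<rho>)"
definition "K12 a b = (\<integral>s. fst s * snd s * exp (- (a * fst s + b * snd s)) \<partial>\<rho>)"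

lemma pb_K:
  assumes "0 \<le> fst s" "0 \<le> snd s" "0 \<le> a" "0 \<le> b"
  shows "\<bar>1 - exp (- (a * fst s + b * snd s))\<bar> \<le> max 1 (max a b) * m s"
proof -
  let ?x = "a * fst s + b * snd s"
  have x0: "0 \<le> ?x" using assms by simp
  have "a * fst s \<le> max a b * fst s" "b * snd s \<le> max a b * snd s"
    using assms by (intro mult_right_mono; simp)+
  then have "?x \<le> max a b * (fst s + snd s)"
    by (simp add: distrib_left)
  have "\<bar>1 - exp (- ?x)\<bar> = 1 - exp (- ?x)" using x0 by simp
  also have "\<dots> \<le> min 1 ?x" using one_minus_exp_le[OF x0] .
  also have "\<dots> \<le> min 1 (max a b * (fst s + snd s))"
    using \<open>?x \<le> _\<close> by simp
  also have "\<dots> \<le> max 1 (max a b) * min 1 (fst s + snd s)"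
    using assms by (intro min_scale_le) auto
  finally show ?thesis by (simp add: m_def)
qed

lemma pb_K1:
  assumes "0 \<le> fst s" "0 \<le> snd s" "0 < c" "c \<le> a" "0 \<le> b"
  shows "\<bar>fst s * exp (- (a * fst s + b * snd s))\<bar> \<le> max 1 (1 / c) * m s"
proof -
  have "\<bar>fst s * exp (- (a * fst s + b * snd s))\<bar> = fst s * exp (- (a * fst s + b * snd s))"
    using assms by simp
  also have "\<dots> \<le> fst s * exp (- (c * fst s))"
  proof -
    have "c * fst s \<le> a * fst s" using assms by (intro mult_right_mono) auto
    moreover have "0 \<le> b * snd s" using assms by simp
    ultimately have "exp (- (a * fst s + b * snd s)) \<le> exp (- (c * fst s))" by simp
    then show ?thesis by (rule mult_left_mono) (use assms in simp)
  qed
  also have "\<dots> \<le> max 1 (1 / c) * min 1 (fst s)" using y_exp_le assms by simp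
  also have "\<dots> \<le> max 1 (1 / c) * m s" using assms
    by (intro mult_left_mono) (auto simp: m_def)
  finally show ?thesis .
qed

lemma pb_K2:
  assumes "0 \<le> fst s" "0 \<le> snd s" "0 < c" "c \<le> b" "0 \<le> a"
  shows "\<bar>snd s * exp (- (a * fst s + b * snd s))\<bar> \<le> max 1 (1 / c) * m s"
proof -
  have "\<bar>snd s * exp (- (a * fst s + b * snd s))\<bar> = snd s * exp (- (a * fst s + b * snd s))"
    using assms by simp
  also have "\<dots> \<le> snd s * exp (- (c * snd s))"
  proof -
    have "c * snd s \<le> b * snd s" using assms by (intro mult_right_mono) auto
    moreover have "0 \<le> a * fst s" using assms by simp
    ultimately have "exp (- (a * fst s + b * snd s)) \<le> exp (- (c * snd s))" by simp
    then show ?thesis by (rule mult_left_mono) (use assms in simp)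
  qed
  also have "\<dots> \<le> max 1 (1 / c) * min 1 (snd s)" using y_exp_le assms by simp
  also have "\<dots> \<le> max 1 (1 / c) * m s" using assms
    by (intro mult_left_mono) (auto simp: m_def)
  finally show ?thesis .
qed

lemma pb_K12:
  assumes "0 \<le> fst s" "0 \<le> snd s" "0 < c" "c \<le> a" "0 < d" "d \<le> b"
  shows "\<bar>fst s * snd s * exp (- (a * fst s + b * snd s))\<bar> \<le> (max 1 (1 / c) / d) * m s"
proof -
  have "\<bar>fst s * snd s * exp (- (a * fst s + b * snd s))\<bar>
      = (fst s * exp (- (a * fst s))) * (snd s * exp (- (b * snd s)))"
    using assms by (simp add: exp_add[symmetric] algebra_simps)
  also have "\<dots> \<le> (max 1 (1 / c) * m s) * (1 / d)"
  proof (rule mult_mono)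
    show "fst s * exp (- (a * fst s)) \<le> max 1 (1 / c) * m s"
      using pb_K1[of s c a 0] assms by simp
    have "d * snd s \<le> b * snd s" using assms by (intro mult_right_mono) auto
    then have "snd s * exp (- (b * snd s)) \<le> snd s * exp (- (d * snd s))"
      using assms by (intro mult_left_mono) auto
    also have "\<dots> \<le> 1 / d" using y_exp_le' assms by simp
    finally show "snd s * exp (- (b * snd s)) \<le> 1 / d" .
  qed (use assms in \<open>auto simp: m_def\<close>)
  finally show ?thesis by simp
qed

lemma int_K: "0 \<le> a \<Longrightarrow> 0 \<le> b \<Longrightarrow> integrable \<rho> (\<lambda>s. 1 - exp (- (a * fst s + b * snd s)))"
  by (rule int_bound[where c="max 1 (max a b)"]) (measurable, rule pb_K, auto)

lemma int_K1: "0 < a \<Longrightarrow> 0 \<le> b \<Longrightarrow> integrable \<rho> (\<lambda>s. fst s * exp (- (a * fst s + b * snd s)))"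
  by (rule int_bound[where c="max 1 (1/a)"]) (measurable, rule pb_K1, auto)

lemma int_K2: "0 \<le> a \<Longrightarrow> 0 < b \<Longrightarrow> integrable \<rho> (\<lambda>s. snd s * exp (- (a * fst s + b * snd s)))"
  by (rule int_bound[where c="max 1 (1/b)"]) (measurable, rule pb_K2, auto)

lemma int_K12: "0 < a \<Longrightarrow> 0 < b \<Longrightarrow> integrable \<rho> (\<lambda>s. fst s * snd s * exp (- (a * fst s + b * snd s)))"
  by (rule int_bound[where c="max 1 (1/a) / b"]) (measurable, rule pb_K12, auto)

lemma D_Ka:
  assumes "0 < a0" "0 \<le> b"
  shows "((\<lambda>a. K a b) has_real_derivative K1 a0 b) (at a0)"
  unfolding K_def K1_def
proof (rule DERIV_integral[where l="a0/2" and r="a0+1" and g="\<lambda>s. max 1 (2/a0) * m s"])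
  show "AE s in \<rho>. \<forall>x. a0/2 < x \<and> x < a0+1 \<longrightarrow>
     ((\<lambda>x. 1 - exp (- (x * fst s + b * snd s))) has_real_derivative fst s * exp (- (x * fst s + b * snd s))) (at x)"
    by (intro AE_I2 allI impI) (auto intro!: derivative_eq_intros)
  show "AE s in \<rho>. \<forall>x. a0/2 < x \<and> x < a0+1 \<longrightarrow> \<bar>fst s * exp (- (x * fst s + b * snd s))\<bar> \<le> max 1 (2/a0) * m s"
    using AE_Q' proof eventually_elim
    case (elim s)
    show ?case using pb_K1[of s "a0/2" _ b] elim assms by auto
  qed
  show "integrable \<rho> (\<lambda>s. max 1 (2/a0) * m s)" using m_int by simp
  show "integrable \<rho> (\<lambda>s. 1 - exp (- (a0 * fst s + b * snd s)))" using int_K assms by simp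
qed (use assms in auto)

lemma D_Kb:
  assumes "0 \<le> a" "0 < b0"
  shows "((\<lambda>b. K a b) has_real_derivative K2 a b0) (at b0)"
  unfolding K_def K2_def
proof (rule DERIV_integral[where l="b0/2" and r="b0+1" and g="\<lambda>s. max 1 (2/b0) * m s"])
  show "AE s in \<rho>. \<forall>x. b0/2 < x \<and> x < b0+1 \<longrightarrow>
     ((\<lambda>x. 1 - exp (- (a * fst s + x * snd s))) has_real_derivative snd s * exp (- (a * fst s + x * snd s))) (at x)"
    by (intro AE_I2 allI impI) (auto intro!: derivative_eq_intros)
  show "AE s in \<rho>. \<forall>x. b0/2 < x \<and> x < b0+1 \<longrightarrow> \<bar>snd s * exp (- (a * fst s + x * snd s))\<bar> \<le> max 1 (2/b0) * m s"
    using AE_Q' proof eventually_elim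
    case (elim s)
    show ?case using pb_K2[of s "b0/2" _ a] elim assms by auto
  qed
  show "integrable \<rho> (\<lambda>s. max 1 (2/b0) * m s)" using m_int by simp
  show "integrable \<rho> (\<lambda>s. 1 - exp (- (a * fst s + b0 * snd s)))" using int_K assms by simp
qed (use assms in auto)

lemma D_K2a:
  assumes "0 < a0" "0 < b"
  shows "((\<lambda>a. K2 a b) has_real_derivative - K12 a0 b) (at a0)"
proof -
  have "((\<lambda>a. K2 a b) has_real_derivative (\<integral>s. - (fst s * snd s * exp (- (a0 * fst s + b * snd s))) \<partial>\<rho>)) (at a0)"
    unfolding K2_def
  proof (rule DERIV_integral[where l="a0/2" and r="a0+1" and g="\<lambda>s. (max 1 (2/a0) / b) * m s"])
    show "AE s in \<rho>. \<forall>x. a0/2 < x \<and> x < a0+1 \<longrightarrow>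
       ((\<lambda>x. snd s * exp (- (x * fst s + b * snd s))) has_real_derivative - (fst s * snd s * exp (- (x * fst s + b * snd s)))) (at x)"
      by (intro AE_I2 allI impI) (auto intro!: derivative_eq_intros)
    show "AE s in \<rho>. \<forall>x. a0/2 < x \<and> x < a0+1 \<longrightarrow> \<bar>- (fst s * snd s * exp (- (x * fst s + b * snd s)))\<bar> \<le> (max 1 (2/a0) / b) * m s"
      using AE_Q' proof eventually_elim
      case (elim s)
      show ?case using pb_K12[of s "a0/2" _ b b] elim assms by auto
    qed
    show "integrable \<rho> (\<lambda>s. (max 1 (2/a0) / b) * m s)" using m_int by simp
    show "integrable \<rho> (\<lambda>s. snd s * exp (- (a0 * fst s + b * snd s)))" using int_K2 assms by simp
  qed (use assms in auto)
  then show ?thesis by (simp add: K12_def)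
qed

lemma K_nonneg: assumes "0 \<le> a" "0 \<le> b" shows "0 \<le> K a b"
  unfolding K_def
proof (rule integral_nonneg_AE)
  show "AE s in \<rho>. 0 \<le> 1 - exp (- (a * fst s + b * snd s))"
    using AE_Q' proof eventually_elim
    case (elim s)
    then have "0 \<le> a * fst s" "0 \<le> b * snd s" using assms by simp_all
    then show ?case by simp
  qed
qed
lemma K1_nonneg: "0 \<le> K1 a b"
  unfolding K1_def by (rule integral_nonneg_AE) (use AE_Q' in \<open>eventually_elim, simp\<close>)
lemma K2_nonneg: "0 \<le> K2 a b"
  unfolding K2_def by (rule integral_nonneg_AE) (use AE_Q' in \<open>eventually_elim, simp\<close>)
lemma K12_nonneg: "0 \<le> K12 a b"
  unfolding K12_def by (rule integral_nonneg_AE) (use AE_Q' in \<open>eventually_elim, simp\<close>)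

lemma K_mono_b: assumes "0 \<le> a" "0 \<le> b" shows "K a 0 \<le> K a b"
  unfolding K_def
proof (rule integral_mono_AE)
  show "integrable \<rho> (\<lambda>s. 1 - exp (- (a * fst s + 0 * snd s)))" using int_K[of a 0] assms by simp
  show "integrable \<rho> (\<lambda>s. 1 - exp (- (a * fst s + b * snd s)))" using int_K assms by simp
  show "AE s in \<rho>. 1 - exp (- (a * fst s + 0 * snd s)) \<le> 1 - exp (- (a * fst s + b * snd s))"
    using AE_Q' proof eventually_elim
    case (elim s)
    then have "0 \<le> b * snd s" using assms by simp
    then show ?case by simp
  qed
qed

lemma K2_mono: assumes "0 \<le> a" "0 < b" shows "K2 a b \<le> K2 0 b"
  unfolding K2_def
proof (rule integral_mono_AE)
  show "integrable \<rho> (\<lambda>s. snd s * exp (- (a * fst s + b * snd s)))" using int_K2 assms by simp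
  show "integrable \<rho> (\<lambda>s. snd s * exp (- (0 * fst s + b * snd s)))" using int_K2[of 0 b] assms by simp
  show "AE s in \<rho>. snd s * exp (- (a * fst s + b * snd s)) \<le> snd s * exp (- (0 * fst s + b * snd s))"
    using AE_Q' proof eventually_elim
    case (elim s)
    then have "0 \<le> a * fst s" using assms by simp
    then have "exp (- (a * fst s + b * snd s)) \<le> exp (- (0 * fst s + b * snd s))" by simp
    then show ?case by (rule mult_left_mono) (use elim in simp)
  qed
qed

end



lemma abs_one_minus_exp_mono: "0 \<le> (x::real) \<Longrightarrow> x \<le> y \<Longrightarrow> \<bar>1 - exp (- x)\<bar> \<le> 1 - exp (- y)"
  by simp

lemma exp_neg_tendsto_0: "0 < (c::real) \<Longrightarrow> (\<lambda>n. exp (- (real n * c))) \<longlonglongrightarrow> 0"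
proof -
  assume c: "0 < c"
  have "filterlim (\<lambda>n. c * real n) at_top sequentially"
    by (rule filterlim_tendsto_pos_mult_at_top[OF tendsto_const c filterlim_real_sequentially])
  then have "filterlim (\<lambda>n. real n * c) at_top sequentially" by (simp add: mult.commute)
  then have "filterlim (\<lambda>n. - (real n * c)) at_bot sequentially"
    by (simp add: filterlim_uminus_at_top)
  then show ?thesis by (rule filterlim_compose[OF exp_at_bot])
qed

sublocale levy \<subseteq> rho: sigma_finite_measure \<rho> by (rule sigma_finite)

context levy begin

lemma K_dir_top:
  fixes h :: "real \<times> real \<Rightarrow> real"
  assumes h[measurable]: "h \<in> borel_measurable borel"
    and hpos: "AE s in \<rho>. 0 \<le> h s"
    and inf: "emeasure \<rho> {s. 0 < h s} = \<infinity>"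
    and int: "\<And>t. 0 \<le> t \<Longrightarrow> integrable \<rho> (\<lambda>s. 1 - exp (- (t * h s)))"
  shows "filterlim (\<lambda>t. \<integral>s. 1 - exp (- (t * h s)) \<partial>\<rho>) at_top at_top"
proof -
  define I where "I t = (\<integral>s. 1 - exp (- (t * h s)) \<partial>\<rho>)" for t
  have mono: "I t \<le> I t'" if tt: "0 \<le> t" "t \<le> t'" for t t'
    unfolding I_def
  proof (rule integral_mono_AE)
    show "AE s in \<rho>. 1 - exp (- (t * h s)) \<le> 1 - exp (- (t' * h s))"
      using hpos proof eventually_elim
      case (elim s) then have "t * h s \<le> t' * h s" using tt by (intro mult_right_mono) auto
      then show ?case by simp
    qed
  qed (use int tt in auto)
  have unb: "\<exists>t\<ge>0. B < I t" for B
  proof (rule ccontr)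
    assume "\<not> ?thesis"
    then have le: "\<And>t. 0 \<le> t \<Longrightarrow> I t \<le> B" by (auto simp: not_less)
    define f where "f n s = ennreal (1 - exp (- (real n * h s)))" for n s
    have inc: "incseq f"
      unfolding incseq_def le_fun_def
    proof (intro allI impI)
      fix n n' :: nat and s assume "n \<le> n'"
      show "f n s \<le> f n' s"
      proof (cases "0 \<le> h s")
        case True
        then have "real n * h s \<le> real n' * h s" using \<open>n \<le> n'\<close> by (intro mult_right_mono) auto
        then show ?thesis unfolding f_def by (intro ennreal_leI) simp
      next
        case False
        then have "0 \<le> - (real n * h s)" by (simp add: mult_nonneg_nonpos)
        then have "1 - exp (- (real n * h s)) \<le> 0" by simp
        then have "f n s = 0" unfolding f_def by (rule ennreal_eq_0_iff[THEN iffD2])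
        then show ?thesis by simp
      qed
    qed
    have fm: "f n \<in> borel_measurable \<rho>" for n unfolding f_def by measurable
    have lim: "(\<lambda>n. f n s) \<longlonglongrightarrow> indicator {s. 0 < h s} s" for s
    proof (cases "0 < h s")
      case True
      have "(\<lambda>n. 1 - exp (- (real n * h s))) \<longlonglongrightarrow> 1 - 0"
        by (intro tendsto_intros exp_neg_tendsto_0 True)
      then have "(\<lambda>n. ennreal (1 - exp (- (real n * h s)))) \<longlonglongrightarrow> ennreal 1"
        by (intro tendsto_ennrealI) simp
      then show ?thesis using True unfolding f_def by simp
    next
      case False
      have "f n s = 0" for n
      proof -
        have "0 \<le> - (real n * h s)" using False by (simp add: mult_nonneg_nonpos)
        then have "1 - exp (- (real n * h s)) \<le> 0" by simp
        then show ?thesis unfolding f_def by (rule ennreal_eq_0_iff[THEN iffD2])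
      qed
      then show ?thesis using False by simp
    qed
    have "(\<lambda>n. integral\<^sup>N \<rho> (f n)) \<longlonglongrightarrow> (\<integral>\<^sup>+ s. indicator {s. 0 < h s} s \<partial>\<rho>)"
      by (rule nn_integral_LIMSEQ[OF inc fm lim])
    moreover have "(\<integral>\<^sup>+ s. indicator {s. 0 < h s} s \<partial>\<rho>) = \<infinity>"
      using inf by (subst nn_integral_indicator) (auto simp: sets_rho)
    moreover have "integral\<^sup>N \<rho> (f n) = ennreal (I n)" for n
      unfolding f_def I_def
    proof (rule nn_integral_eq_integral)
      show "integrable \<rho> (\<lambda>s. 1 - exp (- (real n * h s)))" using int by simp
      show "AE s in \<rho>. 0 \<le> 1 - exp (- (real n * h s))"
        using hpos by eventually_elim simp
    qed
    ultimately have "(\<lambda>n. ennreal (I n)) \<longlonglongrightarrow> \<infinity>" by simp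
    moreover have "\<forall>n::nat. ennreal (I (real n)) \<le> ennreal B"
    proof
      fix n :: nat show "ennreal (I (real n)) \<le> ennreal B" using le[of "real n"] by (intro ennreal_leI) simp
    qed
    ultimately have "\<infinity> \<le> ennreal B" by (intro LIMSEQ_le_const2) auto
    then show False by (simp add: top_unique)
  qed
  show ?thesis unfolding filterlim_at_top
  proof
    fix Z
    obtain t where t: "0 \<le> t" "Z < I t" using unb by blast
    show "eventually (\<lambda>x. Z \<le> (\<integral>s. 1 - exp (- (x * h s)) \<partial>\<rho>)) at_top"
      using eventually_ge_at_top[of t]
    proof eventually_elim
      case (elim x) then show ?case using mono[of t x] t unfolding I_def by linarith
    qed
  qed
qed

lemma rho_fst_inf: "emeasure \<rho> {s. 0 < fst s} = \<infinity>"
proof -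
  have "emeasure \<rho> ({0<..} \<times> {0..}) \<le> emeasure \<rho> {s. 0 < fst s}"
    by (rule emeasure_mono) (auto simp: sets_rho)
  then show ?thesis using L by (simp add: furbi_levy_def top_unique)
qed

lemma rho_snd_inf: "emeasure \<rho> {s. 0 < snd s} = \<infinity>"
proof -
  have "emeasure \<rho> ({0<..} \<times> {0..}) = emeasure \<rho> ({0..} \<times> {0<..})"
    using L unfolding furbi_levy_def by (auto dest!: bspec[of _ _ "{0<..}"])
  moreover have "emeasure \<rho> ({0..} \<times> {0<..}) \<le> emeasure \<rho> {s. 0 < snd s}"
    by (rule emeasure_mono) (auto simp: sets_rho)
  ultimately show ?thesis using L by (simp add: furbi_levy_def top_unique)
qed

lemma lim_Ka_top: "filterlim (\<lambda>a. K a 0) at_top at_top"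
proof -
  have "filterlim (\<lambda>t. \<integral>s. 1 - exp (- (t * fst s)) \<partial>\<rho>) at_top at_top"
    by (rule K_dir_top) (use AE_Q' rho_fst_inf int_K[of _ 0] in auto)
  then show ?thesis by (simp add: K_def)
qed

lemma lim_Kb_top: "filterlim (\<lambda>b. K 0 b) at_top at_top"
proof -
  have "filterlim (\<lambda>t. \<integral>s. 1 - exp (- (t * snd s)) \<partial>\<rho>) at_top at_top"
    by (rule K_dir_top) (use AE_Q' rho_snd_inf int_K[of 0] in auto)
  then show ?thesis by (simp add: K_def)
qed

lemma lim_Ka0:
  assumes b: "0 \<le> b"
  shows "((\<lambda>a. K a b) \<longlongrightarrow> K 0 b) (at_right 0)"
  unfolding K_def
proof (rule integral_dominated_convergence_within[where w="\<lambda>s. 1 - exp (- (1 * fst s + b * snd s))"])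
  show "integrable \<rho> (\<lambda>s. 1 - exp (- (1 * fst s + b * snd s)))" using int_K[of 1 b] b by simp
  show "AE s in \<rho>. ((\<lambda>a. 1 - exp (- (a * fst s + b * snd s))) \<longlongrightarrow> 1 - exp (- (0 * fst s + b * snd s))) (at_right 0)"
    by (intro AE_I2 tendsto_intros)
  show "\<forall>\<^sub>F a in at_right 0. (\<lambda>s. 1 - exp (- (a * fst s + b * snd s))) \<in> borel_measurable \<rho> \<and>
      (AE s in \<rho>. norm (1 - exp (- (a * fst s + b * snd s))) \<le> 1 - exp (- (1 * fst s + b * snd s)))"
  proof (rule eventually_at_rightI[of 0 1])
    fix a :: real assume a: "a \<in> {0<..<1}"
    show "(\<lambda>s. 1 - exp (- (a * fst s + b * snd s))) \<in> borel_measurable \<rho> \<and>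
      (AE s in \<rho>. norm (1 - exp (- (a * fst s + b * snd s))) \<le> 1 - exp (- (1 * fst s + b * snd s)))"
    proof
      show "(\<lambda>s. 1 - exp (- (a * fst s + b * snd s))) \<in> borel_measurable \<rho>" by measurable
      show "AE s in \<rho>. norm (1 - exp (- (a * fst s + b * snd s))) \<le> 1 - exp (- (1 * fst s + b * snd s))"
        using AE_Q' proof eventually_elim
        case (elim s)
        have "a * fst s \<le> 1 * fst s" using a elim by (intro mult_right_mono) auto
        moreover have "0 \<le> a * fst s + b * snd s" using a elim b by simp
        ultimately show ?case unfolding real_norm_def by (intro abs_one_minus_exp_mono) auto
      qed
    qed
  qed simp
qed measurable

lemma lim_K2a0:
  assumes b: "0 < b"
  shows "((\<lambda>a. K2 a b) \<longlongrightarrow> K2 0 b) (at_right 0)"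
  unfolding K2_def
proof (rule integral_dominated_convergence_within[where w="\<lambda>s. snd s * exp (- (0 * fst s + b * snd s))"])
  show "integrable \<rho> (\<lambda>s. snd s * exp (- (0 * fst s + b * snd s)))" using int_K2[of 0 b] b by simp
  show "AE s in \<rho>. ((\<lambda>a. snd s * exp (- (a * fst s + b * snd s))) \<longlongrightarrow> snd s * exp (- (0 * fst s + b * snd s))) (at_right 0)"
    by (intro AE_I2 tendsto_intros)
  show "\<forall>\<^sub>F a in at_right 0. (\<lambda>s. snd s * exp (- (a * fst s + b * snd s))) \<in> borel_measurable \<rho> \<and>
      (AE s in \<rho>. norm (snd s * exp (- (a * fst s + b * snd s))) \<le> snd s * exp (- (0 * fst s + b * snd s)))"
  proof (rule eventually_at_rightI[of 0 1])
    fix a :: real assume a: "a \<in> {0<..<1}"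
    show "(\<lambda>s. snd s * exp (- (a * fst s + b * snd s))) \<in> borel_measurable \<rho> \<and>
      (AE s in \<rho>. norm (snd s * exp (- (a * fst s + b * snd s))) \<le> snd s * exp (- (0 * fst s + b * snd s)))"
    proof
      show "(\<lambda>s. snd s * exp (- (a * fst s + b * snd s))) \<in> borel_measurable \<rho>" by measurable
      show "AE s in \<rho>. norm (snd s * exp (- (a * fst s + b * snd s))) \<le> snd s * exp (- (0 * fst s + b * snd s))"
        using AE_Q' proof eventually_elim
        case (elim s)
        have "0 \<le> a * fst s" using a elim by simp
        then have "exp (- (a * fst s + b * snd s)) \<le> exp (- (0 * fst s + b * snd s))" by simp
        then have "snd s * exp (- (a * fst s + b * snd s)) \<le> snd s * exp (- (0 * fst s + b * snd s))"
          by (rule mult_left_mono) (use elim in simp)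
        then show ?case using elim by simp
      qed
    qed
  qed simp
qed measurable

lemma lim_Kb0: "((\<lambda>b. K 0 b) \<longlongrightarrow> 0) (at_right 0)"
proof -
  have "((\<lambda>b. K 0 b) \<longlongrightarrow> K 0 0) (at_right 0)"
    unfolding K_def
  proof (rule integral_dominated_convergence_within[where w="\<lambda>s. 1 - exp (- (0 * fst s + 1 * snd s))"])
    show "integrable \<rho> (\<lambda>s. 1 - exp (- (0 * fst s + 1 * snd s)))" using int_K[of 0 1] by simp
    show "AE s in \<rho>. ((\<lambda>b. 1 - exp (- (0 * fst s + b * snd s))) \<longlongrightarrow> 1 - exp (- (0 * fst s + 0 * snd s))) (at_right 0)"
      by (intro AE_I2 tendsto_intros)
    show "\<forall>\<^sub>F b in at_right 0. (\<lambda>s. 1 - exp (- (0 * fst s + b * snd s))) \<in> borel_measurable \<rho> \<and>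
        (AE s in \<rho>. norm (1 - exp (- (0 * fst s + b * snd s))) \<le> 1 - exp (- (0 * fst s + 1 * snd s)))"
    proof (rule eventually_at_rightI[of 0 1])
      fix b :: real assume b: "b \<in> {0<..<1}"
      show "(\<lambda>s. 1 - exp (- (0 * fst s + b * snd s))) \<in> borel_measurable \<rho> \<and>
        (AE s in \<rho>. norm (1 - exp (- (0 * fst s + b * snd s))) \<le> 1 - exp (- (0 * fst s + 1 * snd s)))"
      proof
        show "(\<lambda>s. 1 - exp (- (0 * fst s + b * snd s))) \<in> borel_measurable \<rho>" by measurable
        show "AE s in \<rho>. norm (1 - exp (- (0 * fst s + b * snd s))) \<le> 1 - exp (- (0 * fst s + 1 * snd s))"
          using AE_Q' proof eventually_elim
          case (elim s)
          have "b * snd s \<le> 1 * snd s" using b elim by (intro mult_right_mono) auto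
          moreover have "0 \<le> 0 * fst s + b * snd s" using b elim by simp
          ultimately show ?case unfolding real_norm_def by (intro abs_one_minus_exp_mono) auto
        qed
      qed
    qed simp
  qed measurable
  then show ?thesis by (simp add: K_def)
qed

lemma meas_K[measurable]: "(\<lambda>u. K (fst u) (snd u)) \<in> borel_measurable (borel \<Otimes>\<^sub>M borel)"
  unfolding K_def by measurable
lemma meas_K1[measurable]: "(\<lambda>u. K1 (fst u) (snd u)) \<in> borel_measurable (borel \<Otimes>\<^sub>M borel)"
  unfolding K1_def by measurable
lemma meas_K2[measurable]: "(\<lambda>u. K2 (fst u) (snd u)) \<in> borel_measurable (borel \<Otimes>\<^sub>M borel)"
  unfolding K2_def by measurable
lemma meas_K12[measurable]: "(\<lambda>u. K12 (fst u) (snd u)) \<in> borel_measurable (borel \<Otimes>\<^sub>M borel)"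
  unfolding K12_def by measurable

end



lemma nn_integral_FTC_open:
  fixes f F :: "real \<Rightarrow> real"
  assumes f_borel: "f \<in> borel_measurable borel"
  and der: "\<And>x. 0 < x \<Longrightarrow> (F has_real_derivative f x) (at x)"
  and nonneg: "\<And>x. 0 < x \<Longrightarrow> 0 \<le> f x"
  and lim_top: "(F \<longlongrightarrow> T) at_top"
  and lim0: "(F \<longlongrightarrow> L) (at_right 0)"
  shows "(\<integral>\<^sup>+x. ennreal (f x) * indicator {0<..} x \<partial>lborel) = ennreal (T - L)"
proof -
  define e where "e n = 1 / (real n + 1)" for n :: nat
  have e_pos: "0 < e n" for n by (simp add: e_def)
  define g where "g n x = ennreal (f x) * indicator {e n..} x" for n x
  have I: "integral\<^sup>N lborel (g n) = ennreal (T - F (e n))" for n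
    unfolding g_def
    by (rule nn_integral_FTC_atLeast[OF f_borel]) (use der nonneg e_pos lim_top in \<open>auto intro: less_le_trans\<close>)
  have inc: "incseq g"
  proof (unfold incseq_def le_fun_def, intro allI impI)
    fix n n' :: nat and x :: real assume "n \<le> n'"
    then have "e n' \<le> e n" by (simp add: e_def frac_le)
    then show "g n x \<le> g n' x" unfolding g_def by (auto split: split_indicator)
  qed
  have lim: "(\<lambda>n. g n x) \<longlonglongrightarrow> ennreal (f x) * indicator {0<..} x" for x
  proof (cases "0 < x")
    case True
    obtain N where N: "1 / x < real N" using reals_Archimedean2 by blast
    have "e n \<le> x" if "N \<le> n" for n
    proof -
      have "1 / x < real n + 1" using N that by linarith
      then show ?thesis using True by (simp add: e_def field_simps)
    qed
    then have "eventually (\<lambda>n. g n x = ennreal (f x) * indicator {0<..} x) sequentially"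
      using True by (intro eventually_sequentiallyI[of N]) (auto simp: g_def)
    then show ?thesis by (rule tendsto_eventually)
  next
    case False
    then have "g n x = 0" for n using e_pos[of n] by (auto simp: g_def)
    then show ?thesis using False by simp
  qed
  have "(\<lambda>n. integral\<^sup>N lborel (g n)) \<longlonglongrightarrow> (\<integral>\<^sup>+x. ennreal (f x) * indicator {0<..} x \<partial>lborel)"
    by (rule nn_integral_LIMSEQ[OF inc _ lim]) (use f_borel in \<open>simp add: g_def\<close>)
  moreover have "(\<lambda>n. integral\<^sup>N lborel (g n)) \<longlonglongrightarrow> ennreal (T - L)"
  proof -
    have "filterlim e (at_right 0) sequentially"
      unfolding filterlim_at
    proof
      show "e \<longlonglongrightarrow> 0" unfolding e_def
        using LIMSEQ_inverse_real_of_nat_add[of 0] by (simp add: inverse_eq_divide add.commute)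
      show "\<forall>\<^sub>F n in sequentially. e n \<in> {0<..} \<and> e n \<noteq> 0" using e_pos by (simp add: less_imp_neq[symmetric])
    qed
    then have "(\<lambda>n. F (e n)) \<longlonglongrightarrow> L" by (rule filterlim_compose[OF lim0])
    then show ?thesis unfolding I by (intro tendsto_ennrealI tendsto_intros)
  qed
  ultimately show ?thesis using LIMSEQ_unique by blast
qed

locale levyt = levy +
  fixes \<theta> :: real
  assumes th: "0 < \<theta>"
begin

definition "P a b = (\<theta> * K1 a b) * (\<theta> * K2 a b) * exp (- (\<theta> * K a b))"
definition "Q a b = \<theta> * K12 a b * exp (- (\<theta> * K a b))"

lemma P_nonneg: "0 \<le> P a b" unfolding P_def using th K1_nonneg K2_nonneg by simp
lemma Q_nonneg: "0 \<le> Q a b" unfolding Q_def using th K12_nonneg by simp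

lemma meas_P[measurable]: "(\<lambda>u. P (fst u) (snd u)) \<in> borel_measurable (borel \<Otimes>\<^sub>M borel)"
  unfolding P_def by measurable
lemma meas_Q[measurable]: "(\<lambda>u. Q (fst u) (snd u)) \<in> borel_measurable (borel \<Otimes>\<^sub>M borel)"
  unfolding Q_def by measurable

lemma meas_PQ_a: "(\<lambda>a. P a b + Q a b) \<in> borel_measurable borel"
proof -
  have "(\<lambda>a. (\<lambda>u. P (fst u) (snd u) + Q (fst u) (snd u)) (a, b)) \<in> borel_measurable borel"
    by (rule measurable_compose[of _ _ "borel \<Otimes>\<^sub>M borel"]) measurable
  then show ?thesis by simp
qed

lemma meas_K2K_b: "(\<lambda>b. \<theta> * K2 0 b * exp (- (\<theta> * K 0 b))) \<in> borel_measurable borel"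
proof -
  have "(\<lambda>b. (\<lambda>u. \<theta> * K2 (fst u) (snd u) * exp (- (\<theta> * K (fst u) (snd u)))) (0, b)) \<in> borel_measurable borel"
    by (rule measurable_compose[of _ _ "borel \<Otimes>\<^sub>M borel"]) measurable
  then show ?thesis by simp
qed

lemma inner_FTC:
  assumes b: "0 < b"
  shows "(\<integral>\<^sup>+a. ennreal (P a b + Q a b) * indicator {0<..} a \<partial>lborel)
     = ennreal (\<theta> * K2 0 b * exp (- (\<theta> * K 0 b)))"
proof -
  define G where "G a = - (\<theta> * K2 a b) * exp (- (\<theta> * K a b))" for a
  have "(\<integral>\<^sup>+a. ennreal (P a b + Q a b) * indicator {0<..} a \<partial>lborel) = ennreal (0 - G 0)"
  proof (rule nn_integral_FTC_open[OF meas_PQ_a])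
    fix a :: real assume a: "0 < a"
    show "0 \<le> P a b + Q a b" using P_nonneg Q_nonneg by (simp add: add_nonneg_nonneg)
    have d1: "((\<lambda>a. K2 a b) has_real_derivative - K12 a b) (at a)" by (rule D_K2a[OF a b])
    have d2: "((\<lambda>a. K a b) has_real_derivative K1 a b) (at a)" by (rule D_Ka[OF a less_imp_le[OF b]])
    have d3: "((\<lambda>a. exp (- (\<theta> * K a b))) has_real_derivative exp (- (\<theta> * K a b)) * (- (\<theta> * K1 a b))) (at a)"
      by (rule DERIV_chain2[OF DERIV_exp DERIV_minus[OF DERIV_cmult[OF d2]]])
    have "(G has_real_derivative (- (\<theta> * - K12 a b)) * exp (- (\<theta> * K a b))
        + (exp (- (\<theta> * K a b)) * (- (\<theta> * K1 a b))) * (- (\<theta> * K2 a b))) (at a)"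
      unfolding G_def
      by (rule DERIV_mult[OF DERIV_minus[OF DERIV_cmult[OF d1]] d3])
    then show "(G has_real_derivative P a b + Q a b) (at a)"
      by (rule DERIV_cong) (simp add: P_def Q_def algebra_simps)
  next
    show "(G \<longlongrightarrow> 0) at_top"
    proof (rule tendsto_sandwich[where f="\<lambda>a. - (\<theta> * K2 0 b) * exp (- (\<theta> * K a 0))" and h="\<lambda>_. 0"])
      show "\<forall>\<^sub>F a in at_top. - (\<theta> * K2 0 b) * exp (- (\<theta> * K a 0)) \<le> G a"
        using eventually_ge_at_top[of 0]
      proof eventually_elim
        case (elim a)
        have "K2 a b \<le> K2 0 b" using K2_mono elim b by simp
        moreover have "K a 0 \<le> K a b" using K_mono_b elim b by simp
        then have "exp (- (\<theta> * K a b)) \<le> exp (- (\<theta> * K a 0))" using th by simp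
        ultimately show ?case unfolding G_def using th K2_nonneg[of a b] K2_nonneg[of 0 b]
          by (simp add: mult_mono)
      qed
      show "\<forall>\<^sub>F a in at_top. G a \<le> 0"
        unfolding G_def using th K2_nonneg by (simp add: mult_nonneg_nonneg)
      have "filterlim (\<lambda>a. \<theta> * K a 0) at_top at_top"
        by (rule filterlim_tendsto_pos_mult_at_top[OF tendsto_const th lim_Ka_top])
      then have "filterlim (\<lambda>a. - (\<theta> * K a 0)) at_bot at_top"
        by (simp add: filterlim_uminus_at_top)
      then have "((\<lambda>a. exp (- (\<theta> * K a 0))) \<longlongrightarrow> 0) at_top"
        by (rule filterlim_compose[OF exp_at_bot])
      then show "((\<lambda>a. - (\<theta> * K2 0 b) * exp (- (\<theta> * K a 0))) \<longlongrightarrow> 0) at_top"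
        using tendsto_mult[OF tendsto_const[of "- (\<theta> * K2 0 b)"]] by fastforce
    qed simp
  next
    show "(G \<longlongrightarrow> G 0) (at_right 0)"
      unfolding G_def using lim_K2a0[OF b] lim_Ka0[of b] b
      by (auto intro!: tendsto_intros)
  qed
  then show ?thesis by (simp add: G_def)
qed

lemma outer_FTC:
  "(\<integral>\<^sup>+b. ennreal (\<theta> * K2 0 b * exp (- (\<theta> * K 0 b))) * indicator {0<..} b \<partial>lborel) = 1"
proof -
  define H where "H b = - exp (- (\<theta> * K 0 b))" for b
  have "(\<integral>\<^sup>+b. ennreal (\<theta> * K2 0 b * exp (- (\<theta> * K 0 b))) * indicator {0<..} b \<partial>lborel) = ennreal (0 - (-1))"
  proof (rule nn_integral_FTC_open[OF meas_K2K_b])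
    fix b :: real assume b: "0 < b"
    show "0 \<le> \<theta> * K2 0 b * exp (- (\<theta> * K 0 b))" using th K2_nonneg by simp
    have d2: "((\<lambda>b. K 0 b) has_real_derivative K2 0 b) (at b)" by (rule D_Kb[OF order_refl b])
    have "(H has_real_derivative - (exp (- (\<theta> * K 0 b)) * (- (\<theta> * K2 0 b)))) (at b)"
      unfolding H_def by (rule DERIV_minus[OF DERIV_chain2[OF DERIV_exp DERIV_minus[OF DERIV_cmult[OF d2]]]])
    then show "(H has_real_derivative \<theta> * K2 0 b * exp (- (\<theta> * K 0 b))) (at b)"
      by (rule DERIV_cong) (simp add: algebra_simps)
  next
    have "filterlim (\<lambda>b. \<theta> * K 0 b) at_top at_top"
      by (rule filterlim_tendsto_pos_mult_at_top[OF tendsto_const th lim_Kb_top])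
    then have "filterlim (\<lambda>b. - (\<theta> * K 0 b)) at_bot at_top"
      by (simp add: filterlim_uminus_at_top)
    then have "((\<lambda>b. exp (- (\<theta> * K 0 b))) \<longlongrightarrow> 0) at_top"
      by (rule filterlim_compose[OF exp_at_bot])
    from tendsto_minus[OF this] show "(H \<longlongrightarrow> 0) at_top" by (simp add: H_def[abs_def])
  next
    have "((\<lambda>b. - exp (- (\<theta> * K 0 b))) \<longlongrightarrow> - exp (- (\<theta> * 0))) (at_right 0)"
      by (intro tendsto_intros lim_Kb0)
    then show "(H \<longlongrightarrow> -1) (at_right 0)" unfolding H_def by simp
  qed
  then show ?thesis by simp
qed

end



context levyt begin

lemma meas_lborel2:
  assumes "f \<in> borel_measurable (borel \<Otimes>\<^sub>M borel)"
  shows "f \<in> borel_measurable (lborel \<Otimes>\<^sub>M lborel :: (real \<times> real) measure)"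
proof -
  have "sets (lborel \<Otimes>\<^sub>M lborel) = sets (borel \<Otimes>\<^sub>M borel :: (real \<times> real) measure)"
    by (intro sets_pair_measure_cong) simp_all
  from measurable_cong_sets[OF this refl] assms show ?thesis by simp
qed

lemma meas_lborel2':
  assumes "f \<in> borel_measurable (borel \<Otimes>\<^sub>M borel)"
  shows "f \<in> borel_measurable (lborel :: (real \<times> real) measure)"
  using assms unfolding lborel_prod[symmetric] by (rule meas_lborel2)

lemma PQ_total:
  "(\<integral>\<^sup>+u. ennreal (P (fst u) (snd u) + Q (fst u) (snd u)) * indicator ({0<..}\<times>{0<..}) u \<partial>lborel) = 1"
proof -
  let ?f = "\<lambda>u. ennreal (P (fst u) (snd u) + Q (fst u) (snd u)) * indicator ({0<..}\<times>{0<..}) u"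
  have fm: "?f \<in> borel_measurable (lborel \<Otimes>\<^sub>M lborel)"
    by (rule meas_lborel2) measurable
  have "(\<integral>\<^sup>+u. ?f u \<partial>lborel) = (\<integral>\<^sup>+u. ?f u \<partial>(lborel \<Otimes>\<^sub>M lborel))"
    by (simp add: lborel_prod)
  also have "\<dots> = (\<integral>\<^sup>+b. (\<integral>\<^sup>+a. ?f (a, b) \<partial>lborel) \<partial>lborel)"
    by (rule lborel_pair.nn_integral_snd[OF fm, symmetric])
  also have "\<dots> = (\<integral>\<^sup>+b. ennreal (\<theta> * K2 0 b * exp (- (\<theta> * K 0 b))) * indicator {0<..} b \<partial>lborel)"
  proof (rule nn_integral_cong)
    fix b :: real
    have "(\<integral>\<^sup>+a. ?f (a, b) \<partial>lborel) = (\<integral>\<^sup>+a. (ennreal (P a b + Q a b) * indicator {0<..} a) * indicator {0<..} b \<partial>lborel)"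
      by (intro nn_integral_cong) (simp split: split_indicator)
    also have "\<dots> = (\<integral>\<^sup>+a. ennreal (P a b + Q a b) * indicator {0<..} a \<partial>lborel) * indicator {0<..} b"
      by (rule nn_integral_multc) (use meas_PQ_a in simp)
    also have "\<dots> = ennreal (\<theta> * K2 0 b * exp (- (\<theta> * K 0 b))) * indicator {0<..} b"
      by (cases "0 < b") (simp_all add: inner_FTC)
    finally show "(\<integral>\<^sup>+a. ?f (a, b) \<partial>lborel) = ennreal (\<theta> * K2 0 b * exp (- (\<theta> * K 0 b))) * indicator {0<..} b" .
  qed
  also have "\<dots> = 1" by (rule outer_FTC)
  finally show ?thesis .
qed

definition "D2 = ({0<..}\<times>{0<..} :: (real \<times> real) set)"

lemma P_Q_split:
  "(\<integral>\<^sup>+u. ennreal (P (fst u) (snd u)) * indicator D2 u \<partial>lborel) + (\<integral>\<^sup>+u. ennreal (Q (fst u) (snd u)) * indicator D2 u \<partial>lborel) = 1"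
proof -
  have "(\<integral>\<^sup>+u. ennreal (P (fst u) (snd u)) * indicator D2 u \<partial>lborel) + (\<integral>\<^sup>+u. ennreal (Q (fst u) (snd u)) * indicator D2 u \<partial>lborel)
      = (\<integral>\<^sup>+u. ennreal (P (fst u) (snd u)) * indicator D2 u + ennreal (Q (fst u) (snd u)) * indicator D2 u \<partial>lborel)"
  proof -
    have m1: "(\<lambda>u. ennreal (P (fst u) (snd u)) * indicator D2 u) \<in> borel_measurable lborel"
      unfolding D2_def by (rule meas_lborel2') measurable
    have m2: "(\<lambda>u. ennreal (Q (fst u) (snd u)) * indicator D2 u) \<in> borel_measurable lborel"
      unfolding D2_def by (rule meas_lborel2') measurable
    show ?thesis by (rule nn_integral_add[symmetric, OF m1 m2])
  qed
  also have "\<dots> = (\<integral>\<^sup>+u. ennreal (P (fst u) (snd u) + Q (fst u) (snd u)) * indicator ({0<..}\<times>{0<..}) u \<partial>lborel)"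
    by (intro nn_integral_cong) (simp add: D2_def P_nonneg Q_nonneg ennreal_plus distrib_right split: split_indicator)
  also have "\<dots> = 1" by (rule PQ_total)
  finally show ?thesis .
qed

lemma psi_b_eq: "psi_b \<rho> \<theta> a b = \<theta> * K a b"
  by (simp add: psi_b_def K_def)

lemma deriv_eq:
  assumes u: "0 < a0" "0 < b0"
  shows "deriv (\<lambda>a. deriv (\<lambda>b. psi_b \<rho> \<theta> a b) b0) a0 = - (\<theta> * K12 a0 b0)"
proof -
  have inner: "deriv (\<lambda>b. psi_b \<rho> \<theta> a b) b0 = \<theta> * K2 a b0" if "0 \<le> a" for a
    unfolding psi_b_eq by (rule DERIV_imp_deriv[OF DERIV_cmult[OF D_Kb[OF that u(2)]]])
  have "((\<lambda>a. \<theta> * K2 a b0) has_real_derivative \<theta> * - K12 a0 b0) (at a0)"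
    by (rule DERIV_cmult[OF D_K2a[OF u]])
  then have "((\<lambda>a. deriv (\<lambda>b. psi_b \<rho> \<theta> a b) b0) has_real_derivative \<theta> * - K12 a0 b0) (at a0)"
    by (rule has_field_derivative_transform_within_open[where S="{0<..}"]) (use u inner in auto)
  then show ?thesis by (simp add: DERIV_imp_deriv)
qed

lemma deriv_eq':
  assumes u: "0 < a0" "0 < b0"
  shows "deriv (\<lambda>a. deriv (\<lambda>b. \<theta> * K a b) b0) a0 = - (\<theta> * K12 a0 b0)"
  using deriv_eq[OF u] unfolding psi_b_eq .

lemma delta_eq: "furbi_delta \<rho> \<theta> = (\<integral>u. Q (fst u) (snd u) * indicator D2 u \<partial>lborel)"
proof -
  have "furbi_delta \<rho> \<theta> = - (\<integral>u. indicator D2 u * (deriv (\<lambda>a. deriv (\<lambda>b. psi_b \<rho> \<theta> a b) (snd u)) (fst u)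
          * exp (- psi_b \<rho> \<theta> (fst u) (snd u))) \<partial>lborel)"
    unfolding furbi_delta_def set_lebesgue_integral_def D2_def real_scaleR_def ..
  also have "\<dots> = - (\<integral>u. - (Q (fst u) (snd u) * indicator D2 u) \<partial>lborel)"
  proof -
    have "(\<integral>u. indicator D2 u * (deriv (\<lambda>a. deriv (\<lambda>b. psi_b \<rho> \<theta> a b) (snd u)) (fst u)
          * exp (- psi_b \<rho> \<theta> (fst u) (snd u))) \<partial>lborel) = (\<integral>u. - (Q (fst u) (snd u) * indicator D2 u) \<partial>lborel)"
    proof (rule Bochner_Integration.integral_cong[OF refl])
      fix u :: "real \<times> real" assume "u \<in> space lborel"
      show "indicator D2 u * (deriv (\<lambda>a. deriv (\<lambda>b. psi_b \<rho> \<theta> a b) (snd u)) (fst u)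
          * exp (- psi_b \<rho> \<theta> (fst u) (snd u))) = - (Q (fst u) (snd u) * indicator D2 u)"
      proof (cases "u \<in> D2")
        case True
        then have "0 < fst u" "0 < snd u" by (auto simp: D2_def)
        then show ?thesis using True by (simp add: psi_b_eq deriv_eq' Q_def)
      qed simp
    qed
    then show ?thesis by simp
  qed
  also have "\<dots> = (\<integral>u. Q (fst u) (snd u) * indicator D2 u \<partial>lborel)"
    by simp
  finally show ?thesis .
qed

lemma delta_props:
  "(\<integral>\<^sup>+u. ennreal (P (fst u) (snd u)) * indicator D2 u \<partial>lborel) = ennreal (1 - furbi_delta \<rho> \<theta>)"
  "0 \<le> furbi_delta \<rho> \<theta>" "furbi_delta \<rho> \<theta> \<le> 1"
proof -
  let ?IP = "\<integral>\<^sup>+u. ennreal (P (fst u) (snd u)) * indicator D2 u \<partial>lborel"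
  let ?IQ = "\<integral>\<^sup>+u. ennreal (Q (fst u) (snd u)) * indicator D2 u \<partial>lborel"
  have Qm: "(\<lambda>u. Q (fst u) (snd u) * indicator D2 u) \<in> borel_measurable lborel"
    unfolding D2_def by (rule meas_lborel2') measurable
  have eqQ: "?IQ = (\<integral>\<^sup>+u. ennreal (Q (fst u) (snd u) * indicator D2 u) \<partial>lborel)"
    by (intro nn_integral_cong) (simp split: split_indicator)
  have "?IQ \<le> ?IP + ?IQ" by simp
  then have IQ1: "?IQ \<le> 1" using P_Q_split by simp
  have intQ: "integrable lborel (\<lambda>u. Q (fst u) (snd u) * indicator D2 u)"
  proof (rule integrableI_nonneg[OF Qm])
    show "AE x in lborel. 0 \<le> Q (fst x) (snd x) * indicator D2 x" by (simp add: Q_nonneg)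
    show "(\<integral>\<^sup>+ x. ennreal (Q (fst x) (snd x) * indicator D2 x) \<partial>lborel) < \<infinity>"
      using IQ1 eqQ by (simp add: order_le_less_trans)
  qed
  have IQ: "?IQ = ennreal (furbi_delta \<rho> \<theta>)"
    unfolding eqQ delta_eq by (rule nn_integral_eq_integral[OF intQ]) (simp add: Q_nonneg)
  show d0: "0 \<le> furbi_delta \<rho> \<theta>" unfolding delta_eq by (simp add: Q_nonneg)
  show d1: "furbi_delta \<rho> \<theta> \<le> 1" using IQ1 IQ d0 by simp
  have "?IP = ?IP + ?IQ - ?IQ" using IQ by (simp add: ennreal_add_diff_cancel_right)
  then have "?IP = 1 - ?IQ" using P_Q_split by simp
  then show "?IP = ennreal (1 - furbi_delta \<rho> \<theta>)" using IQ d0 ennreal_minus[of "furbi_delta \<rho> \<theta>" 1] by simp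
qed

end



lemma enexp_meas[measurable]: "enexp \<in> borel_measurable borel"
  unfolding enexp_def[abs_def] by measurable

lemma enexp_0[simp]: "enexp 0 = 1" by (simp add: enexp_def)
lemma enexp_top[simp]: "enexp top = 0" by (simp add: enexp_def)
lemma enexp_ennreal: "0 \<le> x \<Longrightarrow> enexp (ennreal x) = exp (- x)" by (simp add: enexp_def)
lemma enexp_nonneg: "0 \<le> enexp x" by (simp add: enexp_def)
lemma enexp_le1: "enexp x \<le> 1" by (simp add: enexp_def)

lemma enexp_add: "enexp (x + y) = enexp x * enexp y"
proof (cases x rule: ennreal_cases)
  case (real a)
  then show ?thesis
  proof (cases y rule: ennreal_cases)
    case (real b)
    then show ?thesis using \<open>x = ennreal a\<close> \<open>0 \<le> a\<close>
      by (simp add: enexp_ennreal ennreal_plus[symmetric] exp_add[symmetric] del: ennreal_plus)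
  qed simp
qed simp

definition tn :: "nat \<Rightarrow> real" where "tn n = inverse (2 ^ n)"

lemma tn_pos: "0 < tn n" by (simp add: tn_def)

lemma tn_at0: "filterlim tn (at 0) sequentially"
  unfolding filterlim_at
proof
  show "tn \<longlonglongrightarrow> 0" unfolding tn_def by (rule LIMSEQ_inverse_realpow_zero) simp
  show "\<forall>\<^sub>F n in sequentially. tn n \<in> UNIV \<and> tn n \<noteq> 0" using tn_pos by (simp add: less_imp_neq[symmetric])
qed

lemma quot_lim:
  assumes "(F has_real_derivative D) (at 0)" "F 0 = 0"
  shows "(\<lambda>n. F (tn n) / tn n) \<longlonglongrightarrow> D"
proof -
  have "((\<lambda>y. (F y - F 0) / (y - 0)) \<longlongrightarrow> D) (at 0)"
    using assms(1) by (simp add: has_field_derivative_iff)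
  from filterlim_compose[OF this tn_at0] show ?thesis using assms(2) by simp
qed

definition r :: "nat \<Rightarrow> ennreal \<Rightarrow> real" where
  "r n c = (1 - enexp (ennreal (tn n) * c)) / tn n"

lemma r_nonneg: "0 \<le> r n c"
  unfolding r_def using enexp_le1 tn_pos by (simp add: divide_nonneg_pos)

lemma r_zero[simp]: "r n 0 = 0" by (simp add: r_def)

lemma r_top: "r n top = 2 ^ n"
proof -
  have "ennreal (tn n) * top = top" using tn_pos[of n] by (simp add: ennreal_mult_top)
  then show ?thesis by (simp add: r_def tn_def divide_inverse)
qed

lemma r_fin: "0 \<le> x \<Longrightarrow> r n (ennreal x) = (1 - exp (- (tn n * x))) / tn n"
  using tn_pos[of n] by (simp add: r_def ennreal_mult'[symmetric] enexp_ennreal)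

lemma r_inc: "incseq (\<lambda>n. r n c)"
proof (cases c rule: ennreal_cases)
  case top
  then show ?thesis by (auto simp: r_top incseq_def intro: power_increasing)
next
  case (real x)
  show ?thesis
  proof (rule incseq_SucI)
    fix n
    define t where "t = tn (Suc n)"
    have t: "0 < t" using tn_pos by (simp add: t_def)
    have tn: "tn n = 2 * t" by (simp add: t_def tn_def)
    define y where "y = t * x"
    have y: "0 \<le> y" using t real by (simp add: y_def)
    have "1 - exp (- (2 * y)) = (1 - exp (- y)) * (1 + exp (- y))"
      by (simp add: algebra_simps exp_add[symmetric])
    also have "\<dots> \<le> (1 - exp (- y)) * 2" using y by (intro mult_left_mono) auto
    finally have "(1 - exp (- (2 * y))) / (2 * t) \<le> ((1 - exp (- y)) * 2) / (2 * t)"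
      by (rule divide_right_mono) (use t in auto)
    also have "\<dots> = (1 - exp (- y)) / t" using t by (simp add: field_simps)
    finally have "(1 - exp (- (2 * y))) / (2 * t) \<le> (1 - exp (- y)) / t" .
    then show "r n c \<le> r (Suc n) c"
      using real by (simp add: r_fin tn y_def t_def[symmetric] mult.assoc)
  qed
qed

lemma r_lim: "(\<lambda>n. ennreal (r n c)) \<longlonglongrightarrow> c"
proof (cases c rule: ennreal_cases)
  case top
  have "filterlim (\<lambda>n. norm ((2::real) ^ n)) at_top sequentially"
    by (rule filterlim_at_infinity_imp_norm_at_top[OF filterlim_realpow_sequentially_gt1]) simp
  then have "filterlim (\<lambda>n. (2::real) ^ n) at_top sequentially" by simp
  then show ?thesis using top by (simp add: r_top ennreal_tendsto_top_eq_at_top)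
next
  case (real x)
  have "((\<lambda>t. 1 - exp (- (t * x))) has_real_derivative x) (at 0)"
    by (auto intro!: derivative_eq_intros)
  from quot_lim[OF this] have "(\<lambda>n. r n c) \<longlonglongrightarrow> x" using real by (simp add: r_fin)
  from tendsto_ennrealI[OF this] show ?thesis using real by simp
qed

lemma prod_lim:
  assumes E: "0 \<le> E"
  shows "(\<lambda>n. ennreal (E * r n c * r n d)) \<longlonglongrightarrow> ennreal E * c * d"
proof (cases "E = 0 \<or> c = 0 \<or> d = 0")
  case True
  then show ?thesis by auto
next
  case False
  have eq: "ennreal (E * r n c * r n d) = ennreal E * ennreal (r n c) * ennreal (r n d)" for n
    using E r_nonneg by (simp add: ennreal_mult)
  have "(\<lambda>n. ennreal E * ennreal (r n c)) \<longlonglongrightarrow> ennreal E * c"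
    by (rule tendsto_mult_ennreal[OF tendsto_const r_lim]) (use False E in \<open>auto simp: ennreal_eq_0_iff\<close>)
  then have "(\<lambda>n. ennreal E * ennreal (r n c) * ennreal (r n d)) \<longlonglongrightarrow> ennreal E * c * d"
    by (rule tendsto_mult_ennreal[OF _ r_lim]) (use False E in \<open>auto simp: ennreal_mult_eq_top_iff ennreal_eq_0_iff\<close>)
  then show ?thesis unfolding eq .
qed

lemma prod_inc:
  assumes E: "0 \<le> E"
  shows "incseq (\<lambda>n. ennreal (E * r n c * r n d))"
proof (rule incseq_SucI)
  fix n
  have "E * r n c * r n d \<le> E * r (Suc n) c * r (Suc n) d"
    using E r_nonneg r_inc[of c] r_inc[of d]
    by (intro mult_mono mult_left_mono) (auto simp: incseq_Suc_iff)
  then show "ennreal (E * r n c * r n d) \<le> ennreal (E * r (Suc n) c * r (Suc n) d)"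
    by (rule ennreal_leI)
qed




locale fs = levyt +
  fixes M :: "'w measure" and \<mu>1 \<mu>2 :: "'w \<Rightarrow> ('a::polish_space \<times> 'a) measure"
    and G0 :: "('a \<times> 'a) measure" and C D :: "('a \<times> 'a) set"
  assumes base: "furbi_base G0" and crv: "furbi_crv M \<mu>1 \<mu>2 \<rho> \<theta> G0"
    and C: "C \<in> sets borel" and D: "D \<in> sets borel" and CD: "C \<inter> D = {}"
begin

lemma M_prob: "prob_space M" using crv by (simp add: furbi_crv_def)
lemma G0_prob: "prob_space G0" using base by (simp add: furbi_base_def)
lemma sets_G0: "sets G0 = sets borel" using base by (simp add: furbi_base_def)
lemma space_G0: "space G0 = UNIV" using sets_eq_imp_space_eq[OF sets_G0] by simp

lemma mu_sets: "\<omega> \<in> space M \<Longrightarrow> sets (\<mu>1 \<omega>) = sets borel \<and> sets (\<mu>2 \<omega>) = sets borel"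
  using crv by (simp add: furbi_crv_def)

lemma meas1[measurable]: "X \<in> sets borel \<Longrightarrow> (\<lambda>\<omega>. emeasure (\<mu>1 \<omega>) X) \<in> borel_measurable M"
  using crv by (simp add: furbi_crv_def)
lemma meas2[measurable]: "X \<in> sets borel \<Longrightarrow> (\<lambda>\<omega>. emeasure (\<mu>2 \<omega>) X) \<in> borel_measurable M"
  using crv by (simp add: furbi_crv_def)

lemma nnI:
  fixes N :: "('a \<times> 'a) measure"
  assumes N: "sets N = sets borel" and X: "X \<in> sets borel" and "0 \<le> u" "0 \<le> t"
  shows "(\<integral>\<^sup>+x. ennreal (u + t * indicator X x) \<partial>N) = ennreal u * emeasure N UNIV + ennreal t * emeasure N X"
proof -
  have sp: "space N = UNIV" using sets_eq_imp_space_eq[OF N] by simp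
  have XN[measurable]: "X \<in> sets N" using N X by simp
  have "(\<integral>\<^sup>+x. ennreal (u + t * indicator X x) \<partial>N) = (\<integral>\<^sup>+x. ennreal u + ennreal t * indicator X x \<partial>N)"
    by (intro nn_integral_cong) (use assms in \<open>simp add: ennreal_plus split: split_indicator\<close>)
  also have "\<dots> = (\<integral>\<^sup>+x. ennreal u \<partial>N) + (\<integral>\<^sup>+x. ennreal t * indicator X x \<partial>N)"
    by (rule nn_integral_add) measurable
  also have "\<dots> = ennreal u * emeasure N UNIV + ennreal t * emeasure N X"
    using XN by (simp add: nn_integral_cmult_indicator sp)
  finally show ?thesis .
qed

lemma Kenn:
  assumes "0 \<le> a" "0 \<le> b"
  shows "(\<integral>\<^sup>+ s. ennreal (1 - exp (- (fst s * a + snd s * b))) \<partial>\<rho>) = ennreal (K a b)"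
proof -
  have "(\<integral>\<^sup>+ s. ennreal (1 - exp (- (fst s * a + snd s * b))) \<partial>\<rho>)
      = (\<integral>\<^sup>+ s. ennreal (1 - exp (- (a * fst s + b * snd s))) \<partial>\<rho>)"
    by (simp add: mult.commute)
  also have "\<dots> = ennreal (K a b)" unfolding K_def
  proof (rule nn_integral_eq_integral)
    show "integrable \<rho> (\<lambda>s. 1 - exp (- (a * fst s + b * snd s)))" using int_K assms by simp
    show "AE s in \<rho>. 0 \<le> 1 - exp (- (a * fst s + b * snd s))"
      using AE_Q' proof eventually_elim
      case (elim s)
      then have "0 \<le> a * fst s" "0 \<le> b * snd s" using assms by simp_all
      then show ?case by simp
    qed
  qed
  finally show ?thesis .
qed

abbreviation "pC \<equiv> measure G0 C"
abbreviation "pD \<equiv> measure G0 D"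

lemma laplace:
  assumes u1: "0 \<le> u1" and u2: "0 \<le> u2" and t1: "0 \<le> t1" and t2: "0 \<le> t2"
  shows "(\<integral>\<omega>. enexp (ennreal u1 * emeasure (\<mu>1 \<omega>) UNIV + ennreal t1 * emeasure (\<mu>1 \<omega>) C
            + (ennreal u2 * emeasure (\<mu>2 \<omega>) UNIV + ennreal t2 * emeasure (\<mu>2 \<omega>) D)) \<partial>M)
     = exp (- (\<theta> * (K u1 u2 + pC * (K (u1+t1) u2 - K u1 u2) + pD * (K u1 (u2+t2) - K u1 u2))))"
proof -
  interpret G: prob_space G0 by (rule G0_prob)
  define f1 where "f1 x = u1 + t1 * indicator C x" for x :: "'a \<times> 'a"
  define f2 where "f2 x = u2 + t2 * indicator D x" for x :: "'a \<times> 'a"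
  have m1: "f1 \<in> borel_measurable borel" unfolding f1_def using C by measurable
  have m2: "f2 \<in> borel_measurable borel" unfolding f2_def using D by measurable
  have nn1: "\<forall>x. 0 \<le> f1 x" using u1 t1 by (simp add: f1_def)
  have nn2: "\<forall>x. 0 \<le> f2 x" using u2 t2 by (simp add: f2_def)
  have H: "(\<integral>\<omega>. enexp ((\<integral>\<^sup>+ x. ennreal (f1 x) \<partial>(\<mu>1 \<omega>)) + (\<integral>\<^sup>+ x. ennreal (f2 x) \<partial>(\<mu>2 \<omega>))) \<partial>M)
        = enexp (ennreal \<theta> * (\<integral>\<^sup>+ x. (\<integral>\<^sup>+ s. ennreal (1 - exp (- (fst s * f1 x + snd s * f2 x))) \<partial>\<rho>) \<partial>G0))"
    using crv m1 m2 nn1 nn2 unfolding furbi_crv_def by blast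
  have L: "(\<integral>\<omega>. enexp ((\<integral>\<^sup>+ x. ennreal (f1 x) \<partial>(\<mu>1 \<omega>)) + (\<integral>\<^sup>+ x. ennreal (f2 x) \<partial>(\<mu>2 \<omega>))) \<partial>M)
     = (\<integral>\<omega>. enexp (ennreal u1 * emeasure (\<mu>1 \<omega>) UNIV + ennreal t1 * emeasure (\<mu>1 \<omega>) C
            + (ennreal u2 * emeasure (\<mu>2 \<omega>) UNIV + ennreal t2 * emeasure (\<mu>2 \<omega>) D)) \<partial>M)"
  proof (rule Bochner_Integration.integral_cong[OF refl])
    fix \<omega> assume w: "\<omega> \<in> space M"
    show "enexp ((\<integral>\<^sup>+ x. ennreal (f1 x) \<partial>(\<mu>1 \<omega>)) + (\<integral>\<^sup>+ x. ennreal (f2 x) \<partial>(\<mu>2 \<omega>))) =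
      enexp (ennreal u1 * emeasure (\<mu>1 \<omega>) UNIV + ennreal t1 * emeasure (\<mu>1 \<omega>) C
            + (ennreal u2 * emeasure (\<mu>2 \<omega>) UNIV + ennreal t2 * emeasure (\<mu>2 \<omega>) D))"
    proof -
      have "(\<integral>\<^sup>+ x. ennreal (f1 x) \<partial>(\<mu>1 \<omega>)) = ennreal u1 * emeasure (\<mu>1 \<omega>) UNIV + ennreal t1 * emeasure (\<mu>1 \<omega>) C"
        unfolding f1_def by (rule nnI) (use mu_sets[OF w] C u1 t1 in auto)
      moreover have "(\<integral>\<^sup>+ x. ennreal (f2 x) \<partial>(\<mu>2 \<omega>)) = ennreal u2 * emeasure (\<mu>2 \<omega>) UNIV + ennreal t2 * emeasure (\<mu>2 \<omega>) D"
        unfolding f2_def by (rule nnI) (use mu_sets[OF w] D u2 t2 in auto)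
      ultimately show ?thesis by simp
    qed
  qed
  define k0 where "k0 = K u1 u2"
  define kC where "kC = K (u1+t1) u2 - K u1 u2"
  define kD where "kD = K u1 (u2+t2) - K u1 u2"
  have kf: "K (f1 x) (f2 x) = k0 + kC * indicator C x + kD * indicator D x" for x
    using CD by (cases "x \<in> C"; cases "x \<in> D") (auto simp: f1_def f2_def k0_def kC_def kD_def)
  have intk: "integrable G0 (\<lambda>x. k0 + kC * indicator C x + kD * indicator D x)"
    using C D sets_G0 by (intro Bochner_Integration.integrable_add Bochner_Integration.integrable_mult_right G.integrable_const integrable_real_indicator) (auto simp: less_top[symmetric])
  have kfnn: "0 \<le> k0 + kC * indicator C x + kD * indicator D x" for x
    using K_nonneg[of "f1 x" "f2 x"] nn1 nn2 unfolding kf by simp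
  have R: "(\<integral>\<^sup>+ x. (\<integral>\<^sup>+ s. ennreal (1 - exp (- (fst s * f1 x + snd s * f2 x))) \<partial>\<rho>) \<partial>G0)
      = ennreal (k0 + kC * pC + kD * pD)"
  proof -
    have "(\<integral>\<^sup>+ x. (\<integral>\<^sup>+ s. ennreal (1 - exp (- (fst s * f1 x + snd s * f2 x))) \<partial>\<rho>) \<partial>G0)
        = (\<integral>\<^sup>+ x. ennreal (k0 + kC * indicator C x + kD * indicator D x) \<partial>G0)"
    proof (rule nn_integral_cong)
      fix x
      show "(\<integral>\<^sup>+ s. ennreal (1 - exp (- (fst s * f1 x + snd s * f2 x))) \<partial>\<rho>) =
          ennreal (k0 + kC * indicator C x + kD * indicator D x)"
        using Kenn[of "f1 x" "f2 x"] nn1 nn2 kf[of x] by simp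
    qed
    also have "\<dots> = ennreal (\<integral>x. k0 + kC * indicator C x + kD * indicator D x \<partial>G0)"
      by (rule nn_integral_eq_integral[OF intk]) (simp add: kfnn)
    also have "(\<integral>x. k0 + kC * indicator C x + kD * indicator D x \<partial>G0) = k0 + kC * pC + kD * pD"
      using C D sets_G0 space_G0
      by (subst Bochner_Integration.integral_add, (intro Bochner_Integration.integrable_add Bochner_Integration.integrable_mult_right G.integrable_const integrable_real_indicator; simp add: less_top[symmetric])+)+
         (simp add: G.prob_space[unfolded space_G0])
    finally show ?thesis .
  qed
  have nnX: "0 \<le> k0 + kC * pC + kD * pD"
  proof -
    have "0 \<le> (\<integral>x. k0 + kC * indicator C x + kD * indicator D x \<partial>G0)" by (rule Bochner_Integration.integral_nonneg) (simp add: kfnn)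
    moreover have "(\<integral>x. k0 + kC * indicator C x + kD * indicator D x \<partial>G0) = k0 + kC * pC + kD * pD"
      using C D sets_G0 space_G0
      by (subst Bochner_Integration.integral_add, (intro Bochner_Integration.integrable_add Bochner_Integration.integrable_mult_right G.integrable_const integrable_real_indicator; simp add: less_top[symmetric])+)+
         (simp add: G.prob_space[unfolded space_G0])
    ultimately show ?thesis by simp
  qed
  have "enexp (ennreal \<theta> * ennreal (k0 + kC * pC + kD * pD)) = exp (- (\<theta> * (k0 + kC * pC + kD * pD)))"
    using th nnX by (simp add: ennreal_mult[symmetric] enexp_ennreal)
  then show ?thesis using H L R unfolding k0_def kC_def kD_def by (simp add: mult.commute)
qed


definition "E0 u1 u2 \<omega> = enexp (ennreal u1 * emeasure (\<mu>1 \<omega>) UNIV + ennreal u2 * emeasure (\<mu>2 \<omega>) UNIV)"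
definition "e1 t \<omega> = enexp (ennreal t * emeasure (\<mu>1 \<omega>) C)"
definition "e2 t \<omega> = enexp (ennreal t * emeasure (\<mu>2 \<omega>) D)"

lemma meas_E0[measurable]: "E0 u1 u2 \<in> borel_measurable M" unfolding E0_def by measurable
lemma meas_e1[measurable]: "e1 t \<in> borel_measurable M" unfolding e1_def using C by measurable
lemma meas_e2[measurable]: "e2 t \<in> borel_measurable M" unfolding e2_def using D by measurable

lemma e1_0[simp]: "e1 0 \<omega> = 1" by (simp add: e1_def)
lemma e2_0[simp]: "e2 0 \<omega> = 1" by (simp add: e2_def)

lemma Phi:
  assumes u1: "0 \<le> u1" and u2: "0 \<le> u2" and t1: "0 \<le> t1" and t2: "0 \<le> t2"
  shows "(\<integral>\<omega>. E0 u1 u2 \<omega> * e1 t1 \<omega> * e2 t2 \<omega> \<partial>M) = exp (- (\<theta> * K u1 u2))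
      * exp (- (\<theta> * pC * (K (u1+t1) u2 - K u1 u2))) * exp (- (\<theta> * pD * (K u1 (u2+t2) - K u1 u2)))"
proof -
  have "(\<integral>\<omega>. E0 u1 u2 \<omega> * e1 t1 \<omega> * e2 t2 \<omega> \<partial>M) = (\<integral>\<omega>. enexp (ennreal u1 * emeasure (\<mu>1 \<omega>) UNIV + ennreal t1 * emeasure (\<mu>1 \<omega>) C
            + (ennreal u2 * emeasure (\<mu>2 \<omega>) UNIV + ennreal t2 * emeasure (\<mu>2 \<omega>) D)) \<partial>M)"
    by (intro Bochner_Integration.integral_cong refl) (simp add: E0_def e1_def e2_def enexp_add[symmetric] add_ac)
  also have "\<dots> = exp (- (\<theta> * (K u1 u2 + pC * (K (u1+t1) u2 - K u1 u2) + pD * (K u1 (u2+t2) - K u1 u2))))"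
    by (rule laplace[OF u1 u2 t1 t2])
  also have "- (\<theta> * (K u1 u2 + pC * (K (u1+t1) u2 - K u1 u2) + pD * (K u1 (u2+t2) - K u1 u2)))
      = - (\<theta> * K u1 u2) + - (\<theta> * pC * (K (u1+t1) u2 - K u1 u2)) + - (\<theta> * pD * (K u1 (u2+t2) - K u1 u2))"
    by (simp add: algebra_simps)
  finally show ?thesis by (simp only: exp_add)
qed

lemma E0_bounds: "0 \<le> E0 u1 u2 \<omega>" "E0 u1 u2 \<omega> \<le> 1"
  by (simp_all add: E0_def enexp_nonneg enexp_le1)
lemma e1_bounds: "0 \<le> e1 t \<omega>" "e1 t \<omega> \<le> 1"
  by (simp_all add: e1_def enexp_nonneg enexp_le1)
lemma e2_bounds: "0 \<le> e2 t \<omega>" "e2 t \<omega> \<le> 1"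
  by (simp_all add: e2_def enexp_nonneg enexp_le1)

lemma int_E0e: "integrable M (\<lambda>\<omega>. E0 u1 u2 \<omega> * e1 a \<omega> * e2 b \<omega>)"
proof -
  interpret prob_space M by (rule M_prob)
  show ?thesis
  proof (rule integrable_const_bound[where B=1])
    show "AE x in M. norm (E0 u1 u2 x * e1 a x * e2 b x) \<le> 1"
    proof (rule AE_I2)
      fix x
      have "E0 u1 u2 x * e1 a x * e2 b x \<le> 1 * 1 * 1"
        using E0_bounds e1_bounds e2_bounds by (intro mult_mono) auto
      then show "norm (E0 u1 u2 x * e1 a x * e2 b x) \<le> 1"
        using E0_bounds e1_bounds e2_bounds by simp
    qed
  qed measurable
qed

lemma combo:
  assumes u1: "0 \<le> u1" and u2: "0 \<le> u2" and t: "0 \<le> t"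
  shows "(\<integral>\<omega>. E0 u1 u2 \<omega> * (1 - e1 t \<omega>) * (1 - e2 t \<omega>) \<partial>M) = exp (- (\<theta> * K u1 u2))
      * (1 - exp (- (\<theta> * pC * (K (u1+t) u2 - K u1 u2)))) * (1 - exp (- (\<theta> * pD * (K u1 (u2+t) - K u1 u2))))"
proof -
  let ?g = "\<lambda>a b \<omega>. E0 u1 u2 \<omega> * e1 a \<omega> * e2 b \<omega>"
  have "(\<integral>\<omega>. E0 u1 u2 \<omega> * (1 - e1 t \<omega>) * (1 - e2 t \<omega>) \<partial>M)
      = (\<integral>\<omega>. ?g 0 0 \<omega> - ?g t 0 \<omega> - ?g 0 t \<omega> + ?g t t \<omega> \<partial>M)"
    by (intro Bochner_Integration.integral_cong refl) (simp add: algebra_simps)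
  also have "\<dots> = (\<integral>\<omega>. ?g 0 0 \<omega> \<partial>M) - (\<integral>\<omega>. ?g t 0 \<omega> \<partial>M) - (\<integral>\<omega>. ?g 0 t \<omega> \<partial>M) + (\<integral>\<omega>. ?g t t \<omega> \<partial>M)"
    using int_E0e by (simp del: e1_0 e2_0)
  also have "\<dots> = exp (- (\<theta> * K u1 u2))
      * (1 - exp (- (\<theta> * pC * (K (u1+t) u2 - K u1 u2)))) * (1 - exp (- (\<theta> * pD * (K u1 (u2+t) - K u1 u2))))"
  proof -
    have p00: "(\<integral>\<omega>. ?g 0 0 \<omega> \<partial>M) = exp (- (\<theta> * K u1 u2))"
      using Phi[OF u1 u2 order_refl order_refl] by simp
    have p10: "(\<integral>\<omega>. ?g t 0 \<omega> \<partial>M) = exp (- (\<theta> * K u1 u2)) * exp (- (\<theta> * pC * (K (u1+t) u2 - K u1 u2)))"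
      using Phi[OF u1 u2 t order_refl] by simp
    have p01: "(\<integral>\<omega>. ?g 0 t \<omega> \<partial>M) = exp (- (\<theta> * K u1 u2)) * exp (- (\<theta> * pD * (K u1 (u2+t) - K u1 u2)))"
      using Phi[OF u1 u2 order_refl t] by simp
    have p11: "(\<integral>\<omega>. ?g t t \<omega> \<partial>M) = exp (- (\<theta> * K u1 u2))
      * exp (- (\<theta> * pC * (K (u1+t) u2 - K u1 u2))) * exp (- (\<theta> * pD * (K u1 (u2+t) - K u1 u2)))"
      using Phi[OF u1 u2 t t] .
    show ?thesis unfolding p00 p10 p01 p11 by (simp add: algebra_simps)
  qed
  finally show ?thesis .
qed


lemma r_le: "r n c \<le> 1 / tn n"
  unfolding r_def using tn_pos[of n] enexp_nonneg by (intro divide_right_mono) auto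

lemma dK_shift:
  assumes "0 < u1" "0 \<le> u2"
  shows "((\<lambda>t. K (u1 + t) u2) has_real_derivative K1 u1 u2) (at 0)"
proof -
  have "((\<lambda>a. K a u2) has_real_derivative K1 u1 u2) (at (0 + u1))" using D_Ka[OF assms] by simp
  then have "((\<lambda>t. K (t + u1) u2) has_real_derivative K1 u1 u2) (at 0)" by (simp only: DERIV_shift)
  then show ?thesis by (simp add: add.commute)
qed

lemma dK_shift2:
  assumes "0 \<le> u1" "0 < u2"
  shows "((\<lambda>t. K u1 (u2 + t)) has_real_derivative K2 u1 u2) (at 0)"
proof -
  have "((\<lambda>b. K u1 b) has_real_derivative K2 u1 u2) (at (0 + u2))" using D_Kb[OF assms] by simp
  then have "((\<lambda>t. K u1 (t + u2)) has_real_derivative K2 u1 u2) (at 0)" by (simp only: DERIV_shift)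
  then show ?thesis by (simp add: add.commute)
qed

lemma inner_val:
  assumes u1: "0 < u1" and u2: "0 < u2"
  shows "(\<integral>\<^sup>+\<omega>. ennreal (E0 u1 u2 \<omega>) * emeasure (\<mu>1 \<omega>) C * emeasure (\<mu>2 \<omega>) D \<partial>M)
     = ennreal (pC * pD * P u1 u2)"
proof -
  interpret prob_space M by (rule M_prob)
  define h where "h n \<omega> = ennreal (E0 u1 u2 \<omega> * r n (emeasure (\<mu>1 \<omega>) C) * r n (emeasure (\<mu>2 \<omega>) D))" for n \<omega>
  define X where "X = exp (- (\<theta> * K u1 u2))"
  define F1 where "F1 t = 1 - exp (- (\<theta> * pC * (K (u1+t) u2 - K u1 u2)))" for t
  define F2 where "F2 t = 1 - exp (- (\<theta> * pD * (K u1 (u2+t) - K u1 u2)))" for t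
  have inc: "incseq h"
    unfolding incseq_def le_fun_def h_def
    using prod_inc[OF E0_bounds(1)] unfolding incseq_def by blast
  have hm: "h n \<in> borel_measurable M" for n unfolding h_def r_def using C D by measurable
  have lim: "(\<lambda>n. h n \<omega>) \<longlonglongrightarrow> ennreal (E0 u1 u2 \<omega>) * emeasure (\<mu>1 \<omega>) C * emeasure (\<mu>2 \<omega>) D" for \<omega>
    unfolding h_def by (rule prod_lim[OF E0_bounds(1)])
  have L1: "(\<lambda>n. integral\<^sup>N M (h n)) \<longlonglongrightarrow>
      (\<integral>\<^sup>+\<omega>. ennreal (E0 u1 u2 \<omega>) * emeasure (\<mu>1 \<omega>) C * emeasure (\<mu>2 \<omega>) D \<partial>M)"
    by (rule nn_integral_LIMSEQ[OF inc hm lim])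
  have hval: "integral\<^sup>N M (h n) = ennreal (X * (F1 (tn n) / tn n) * (F2 (tn n) / tn n))" for n
  proof -
    have tp: "0 < tn n" by (rule tn_pos)
    have int: "integrable M (\<lambda>\<omega>. E0 u1 u2 \<omega> * r n (emeasure (\<mu>1 \<omega>) C) * r n (emeasure (\<mu>2 \<omega>) D))"
    proof (rule integrable_const_bound[where B="1 * (1 / tn n) * (1 / tn n)"])
      show "AE x in M. norm (E0 u1 u2 x * r n (emeasure (\<mu>1 x) C) * r n (emeasure (\<mu>2 x) D)) \<le> 1 * (1 / tn n) * (1 / tn n)"
      proof (rule AE_I2)
        fix x
        have "E0 u1 u2 x * r n (emeasure (\<mu>1 x) C) * r n (emeasure (\<mu>2 x) D) \<le> 1 * (1 / tn n) * (1 / tn n)"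
          using E0_bounds r_nonneg r_le tn_pos[of n] by (intro mult_mono) auto
        then show "norm (E0 u1 u2 x * r n (emeasure (\<mu>1 x) C) * r n (emeasure (\<mu>2 x) D)) \<le> 1 * (1 / tn n) * (1 / tn n)"
          using E0_bounds r_nonneg by simp
      qed
      show "(\<lambda>x. E0 u1 u2 x * r n (emeasure (\<mu>1 x) C) * r n (emeasure (\<mu>2 x) D)) \<in> borel_measurable M"
        unfolding r_def using C D by measurable
    qed
    have "integral\<^sup>N M (h n) = ennreal (\<integral>\<omega>. E0 u1 u2 \<omega> * r n (emeasure (\<mu>1 \<omega>) C) * r n (emeasure (\<mu>2 \<omega>) D) \<partial>M)"
      unfolding h_def by (rule nn_integral_eq_integral[OF int]) (simp add: E0_bounds r_nonneg)
    also have "(\<integral>\<omega>. E0 u1 u2 \<omega> * r n (emeasure (\<mu>1 \<omega>) C) * r n (emeasure (\<mu>2 \<omega>) D) \<partial>M)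
        = (\<integral>\<omega>. E0 u1 u2 \<omega> * (1 - e1 (tn n) \<omega>) * (1 - e2 (tn n) \<omega>) / (tn n * tn n) \<partial>M)"
      by (intro Bochner_Integration.integral_cong refl) (simp add: r_def e1_def e2_def)
    also have "\<dots> = (\<integral>\<omega>. E0 u1 u2 \<omega> * (1 - e1 (tn n) \<omega>) * (1 - e2 (tn n) \<omega>) \<partial>M) / (tn n * tn n)"
      by (rule integral_divide_zero)
    also have "\<dots> = X * (F1 (tn n) / tn n) * (F2 (tn n) / tn n)"
      using combo[OF less_imp_le[OF u1] less_imp_le[OF u2] less_imp_le[OF tp]]
      by (simp add: X_def F1_def F2_def)
    finally show ?thesis .
  qed
  have q1: "(\<lambda>n. F1 (tn n) / tn n) \<longlonglongrightarrow> \<theta> * pC * K1 u1 u2"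
  proof (rule quot_lim)
    show "(F1 has_real_derivative \<theta> * pC * K1 u1 u2) (at 0)"
      unfolding F1_def[abs_def] using dK_shift[OF u1 less_imp_le[OF u2]]
      by (auto intro!: derivative_eq_intros)
    show "F1 0 = 0" by (simp add: F1_def)
  qed
  have q2: "(\<lambda>n. F2 (tn n) / tn n) \<longlonglongrightarrow> \<theta> * pD * K2 u1 u2"
  proof (rule quot_lim)
    show "(F2 has_real_derivative \<theta> * pD * K2 u1 u2) (at 0)"
      unfolding F2_def[abs_def] using dK_shift2[OF less_imp_le[OF u1] u2]
      by (auto intro!: derivative_eq_intros)
    show "F2 0 = 0" by (simp add: F2_def)
  qed
  have L2: "(\<lambda>n. integral\<^sup>N M (h n)) \<longlonglongrightarrow> ennreal (X * (\<theta> * pC * K1 u1 u2) * (\<theta> * pD * K2 u1 u2))"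
    unfolding hval by (intro tendsto_ennrealI tendsto_mult tendsto_const q1 q2)
  have "X * (\<theta> * pC * K1 u1 u2) * (\<theta> * pD * K2 u1 u2) = pC * pD * P u1 u2"
    by (simp add: X_def P_def algebra_simps)
  then show ?thesis using LIMSEQ_unique[OF L1 L2] by (simp only:)
qed

end

theorem lemmaS3:
  fixes M :: "'w measure"
    and \<mu>1 \<mu>2 :: "'w \<Rightarrow> ('a::polish_space \<times> 'a) measure"
    and \<rho> :: "(real \<times> real) measure"
    and \<theta> :: real
    and G0 :: "('a \<times> 'a) measure"
    and C D :: "('a \<times> 'a) set"
  assumes "0 < \<theta>"
    and "furbi_base G0"
    and "furbi_levy \<rho>"
    and "furbi_crv M \<mu>1 \<mu>2 \<rho> \<theta> G0"
    and "C \<in> sets borel" and "D \<in> sets borel" and "C \<inter> D = {}"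
  shows "(\<integral>\<^sup>+ u \<in> {0<..}\<times>{0<..}.
            (\<integral>\<^sup>+ \<omega>. ennreal (enexp (ennreal (fst u) * emeasure (\<mu>1 \<omega>) UNIV
                                       + ennreal (snd u) * emeasure (\<mu>2 \<omega>) UNIV))
                     * emeasure (\<mu>1 \<omega>) C * emeasure (\<mu>2 \<omega>) D \<partial>M) \<partial>lborel)
         = ennreal (measure G0 C * measure G0 D * (1 - furbi_delta \<rho> \<theta>))"
proof -
  interpret F: fs \<rho> \<theta> M \<mu>1 \<mu>2 G0 C D
    by unfold_locales (use assms in auto)
  have pCD: "0 \<le> measure G0 C * measure G0 D" by simp
  have "(\<integral>\<^sup>+ u \<in> {0<..}\<times>{0<..}.
            (\<integral>\<^sup>+ \<omega>. ennreal (enexp (ennreal (fst u) * emeasure (\<mu>1 \<omega>) UNIV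
                                       + ennreal (snd u) * emeasure (\<mu>2 \<omega>) UNIV))
                     * emeasure (\<mu>1 \<omega>) C * emeasure (\<mu>2 \<omega>) D \<partial>M) \<partial>lborel)
      = (\<integral>\<^sup>+ u. ennreal (measure G0 C * measure G0 D) * (ennreal (F.P (fst u) (snd u)) * indicator F.D2 u) \<partial>lborel)"
  proof (rule nn_integral_cong)
    fix u :: "real \<times> real"
    show "(\<integral>\<^sup>+ \<omega>. ennreal (enexp (ennreal (fst u) * emeasure (\<mu>1 \<omega>) UNIV
                                       + ennreal (snd u) * emeasure (\<mu>2 \<omega>) UNIV))
                     * emeasure (\<mu>1 \<omega>) C * emeasure (\<mu>2 \<omega>) D \<partial>M) * indicator ({0<..}\<times>{0<..}) u
        = ennreal (measure G0 C * measure G0 D) * (ennreal (F.P (fst u) (snd u)) * indicator F.D2 u)"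
    proof (cases "u \<in> F.D2")
      case True
      then have "0 < fst u" "0 < snd u" by (auto simp: F.D2_def)
      from F.inner_val[OF this] show ?thesis using True pCD F.P_nonneg
        by (simp add: F.E0_def F.D2_def ennreal_mult)
    next
      case False
      then show ?thesis by (simp add: F.D2_def)
    qed
  qed
  also have "\<dots> = ennreal (measure G0 C * measure G0 D) * (\<integral>\<^sup>+ u. ennreal (F.P (fst u) (snd u)) * indicator F.D2 u \<partial>lborel)"
    by (rule nn_integral_cmult) (unfold F.D2_def, rule F.meas_lborel2', measurable)
  also have "\<dots> = ennreal (measure G0 C * measure G0 D) * ennreal (1 - furbi_delta \<rho> \<theta>)"
    by (simp add: F.delta_props(1))
  also have "\<dots> = ennreal (measure G0 C * measure G0 D * (1 - furbi_delta \<rho> \<theta>))"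
    using F.delta_props(3) pCD by (simp add: ennreal_mult)
  finally show ?thesis .
qed

end
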